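(* Let $(f_n)$ be a sequence of complex rational maps of degree $d\ge2$ and $(M,\eta)$ a $g$-rescaling adapted to $(f_n)$ whose limit $(M\cdot f\cdot M^{-1})_\eta$ is conjugate by a Möbius transformation over $\mathscr H_\eta$ to a rational map with coefficients in $\mathbb C\subset\mathscr H_\eta$ (embedded via constant sequences). Then $\eta=(1)$.
   Context: Fix a non-principal ultrafilter $\omega$ on $\mathbb N$; $\lim$ denotes the limit along $\omega$. A scale is an equivalence class of bounded sequences of positive reals, $(\varepsilon_n)\sim(\eta_n)$ iff $\lim\varepsilon_n/\eta_n\in(0,\infty)$, totally ordered by $\varepsilon\le\eta$ iff $\lim \varepsilon_n/\eta_n<\infty$ ($\varepsilon<\eta$ iff the limit is $0$), with maximum the trivial scale $(1)$. For a scale $\varepsilon$, $\mathscr H_\varepsilon$ is the quotient of $\{(z_n)\in\mathbb C^{\mathbb N}:\lim|z_n|^{\varepsilon_n}<\infty\}$ by $\{(z_n):\lim|z_n|^{\varepsilon_n}=0\}$ with norm $\lim|z_n|^{\min(1,\varepsilon_n)}$; $\mathscr H_{(1)}\cong\mathbb C$, and for $\varepsilon<(1)$ it is an algebraically closed complete non-Archimedean field with residue field $\widetilde{\mathscr H}_\varepsilon$ of characteristic $0$. Limits: for a sequence $(g_n)$ of complex rational maps of degree $d$, write $g_n=[P_n:Q_n]$ with coefficients of maximal modulus $1$; the coefficient sequences give $P_\varepsilon,Q_\varepsilon$ over $\mathscr H_\varepsilon$; dividing by their gcd gives the limit $g_\varepsilon$. $M\cdot f\cdot M^{-1}=(M_n\circ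 f_n\circ M_n^{-1})$. Over a non-Archimedean field, $g$ has good reduction iff $|\mathrm{Res}(g)|=|\mathrm{Res}(P,Q)|/\max(|\text{coefficients}|)^{2d}=1$; potential good reduction iff conjugate over the field to a map with good reduction; by convention a map over $\mathscr H_{(1)}=\mathbb C$ never has potential good reduction. For $\varepsilon<(1)$, $x_g$ is the Gauss point of the Berkovich line over $\mathscr H_\varepsilon$; directions at $x_g$ are identified with $\mathbb P^1(\widetilde{\mathscr H}_\varepsilon)$; a direction $v$ at a fixed point $x$ of $g$ is bad if its open component meets $g^{-1}(x)$; for $\varepsilon<\eta$ the canonical map $\mathbb P^1(\widetilde{\mathscr H}_\varepsilon)\to\mathbb P^1(\mathscr H_\eta)$ sends a point with homogeneous coordinates given by complex sequences of modulus $\le1$ (one of modulus $1$) to the point with the same coordinate sequences. A $g$-rescaling is a pair $(M,\eta)$ of a sequence of complex Möbius transformations and a scale. It is adapted to $f$ if: (A1) $(M\cdot f\cdot M^{-1})_\eta$ has degree $\delta\ge1$; (A2) if $\eta<(1)$ it does not have potential good reduction; (A3) if $\delta=1$, there is a scale $\varepsilon<\eta$ such that $(M\cdot f\cdot M^{-1})_\varepsilon$ fixes $x_g$ with local degree $1$, and a bad direction $v$ at $x_g$ whose image in $\mathbb P^1(\mathscr H_\eta)$ has infinite orbit under $(M\cdot f\cdot M^{-1})_\eta$. *)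

theory Defs
  imports "Jordan_Normal_Form.Determinant" "HOL-Computational_Algebra.Polynomial"
          "HOL-Library.Extended_Real"
begin

definition nonprincipal_ultrafilter :: "nat filter \<Rightarrow> bool" where
  "nonprincipal_ultrafilter U \<longleftrightarrow> U \<noteq> bot
     \<and> (\<forall>A. eventually (\<lambda>n. n \<in> A) U \<or> eventually (\<lambda>n. n \<notin> A) U)
     \<and> (\<forall>m. eventually (\<lambda>n. n \<noteq> m) U)"

text \<open>Limit along the ultrafilter, taken in the compact space of extended reals.\<close>
definition ulim :: "nat filter \<Rightarrow> (nat \<Rightarrow> ereal) \<Rightarrow> ereal" where
  "ulim U x = Lim U x"

definition is_scale :: "(nat \<Rightarrow> real) \<Rightarrow> bool" where
  "is_scale \<epsilon> \<longleftrightarrow> (\<forall>n. 0 < \<epsilon> n) \<and> bdd_above (range \<epsilon>)"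

definition scale_le :: "nat filter \<Rightarrow> (nat \<Rightarrow> real) \<Rightarrow> (nat \<Rightarrow> real) \<Rightarrow> bool" where
  "scale_le U \<epsilon> \<eta> \<longleftrightarrow> ulim U (\<lambda>n. ereal (\<epsilon> n / \<eta> n)) < \<infinity>"

definition scale_less :: "nat filter \<Rightarrow> (nat \<Rightarrow> real) \<Rightarrow> (nat \<Rightarrow> real) \<Rightarrow> bool" where
  "scale_less U \<epsilon> \<eta> \<longleftrightarrow> ulim U (\<lambda>n. ereal (\<epsilon> n / \<eta> n)) = 0"

definition scale_equiv :: "nat filter \<Rightarrow> (nat \<Rightarrow> real) \<Rightarrow> (nat \<Rightarrow> real) \<Rightarrow> bool" where
  "scale_equiv U \<epsilon> \<eta> \<longleftrightarrow> 0 < ulim U (\<lambda>n. ereal (\<epsilon> n / \<eta> n))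
                          \<and> ulim U (\<lambda>n. ereal (\<epsilon> n / \<eta> n)) < \<infinity>"

definition one_scale :: "nat \<Rightarrow> real" where
  "one_scale = (\<lambda>_. 1)"

section \<open>The fields H_eps, represented by complex sequences\<close>

definition hval :: "nat filter \<Rightarrow> (nat \<Rightarrow> real) \<Rightarrow> (nat \<Rightarrow> complex) \<Rightarrow> ereal" where
  "hval U \<epsilon> z = ulim U (\<lambda>n. ereal (cmod (z n) powr \<epsilon> n))"

definition in_H :: "nat filter \<Rightarrow> (nat \<Rightarrow> real) \<Rightarrow> (nat \<Rightarrow> complex) \<Rightarrow> bool" where
  "in_H U \<epsilon> z \<longleftrightarrow> hval U \<epsilon> z < \<infinity>"

definition hzero :: "nat filter \<Rightarrow> (nat \<Rightarrow> real) \<Rightarrow> (nat \<Rightarrow> complex) \<Rightarrow> bool" where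
  "hzero U \<epsilon> z \<longleftrightarrow> hval U \<epsilon> z = 0"

definition heq :: "nat filter \<Rightarrow> (nat \<Rightarrow> real) \<Rightarrow> (nat \<Rightarrow> complex) \<Rightarrow> (nat \<Rightarrow> complex) \<Rightarrow> bool" where
  "heq U \<epsilon> z w \<longleftrightarrow> hzero U \<epsilon> (\<lambda>n. z n - w n)"

definition hnorm :: "nat filter \<Rightarrow> (nat \<Rightarrow> real) \<Rightarrow> (nat \<Rightarrow> complex) \<Rightarrow> ereal" where
  "hnorm U \<epsilon> z = ulim U (\<lambda>n. ereal (cmod (z n) powr min 1 (\<epsilon> n)))"

text \<open>A binary form of degree d is represented by its dehomogenisation, a polynomial of
  degree at most d: coefficient k is the coefficient of X^k Y^(d-k).\<close>

definition hform_eval :: "nat \<Rightarrow> complex poly \<Rightarrow> complex \<Rightarrow> complex \<Rightarrow> complex" where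
  "hform_eval d P x y = (\<Sum>k\<le>d. coeff P k * x ^ k * y ^ (d - k))"

definition hform_subst :: "nat \<Rightarrow> complex poly \<Rightarrow> complex poly \<Rightarrow> complex poly \<Rightarrow> complex poly" where
  "hform_subst d P X Y = (\<Sum>k\<le>d. smult (coeff P k) (X ^ k * Y ^ (d - k)))"

text \<open>Sylvester matrix of two binary forms of degree d (coefficients listed from X^d down).\<close>
definition sylvester_hom :: "nat \<Rightarrow> complex poly \<Rightarrow> complex poly \<Rightarrow> complex mat" where
  "sylvester_hom d P Q = mat (2*d) (2*d) (\<lambda>(i,j).
      if i < d then (if i \<le> j \<and> j \<le> i + d then coeff P (d + i - j) else 0)
      else (if i - d \<le> j \<and> j \<le> i then coeff Q (i - j) else 0))"

definition hres :: "nat \<Rightarrow> complex poly \<Rightarrow> complex poly \<Rightarrow> complex" where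
  "hres d P Q = det (sylvester_hom d P Q)"

definition ratmap :: "nat \<Rightarrow> complex poly \<Rightarrow> complex poly \<Rightarrow> bool" where
  "ratmap d P Q \<longleftrightarrow> degree P \<le> d \<and> degree Q \<le> d \<and> hres d P Q \<noteq> 0"

type_synonym mob = "complex \<times> complex \<times> complex \<times> complex"

definition mob_det :: "mob \<Rightarrow> complex" where
  "mob_det N = (case N of (a,b,c,e) \<Rightarrow> a*e - b*c)"

text \<open>N o [P:Q] o N^{-1} in homogeneous coordinates (N = [[a,b],[c,e]]; N^{-1} via the adjugate).\<close>
definition conj_mob :: "nat \<Rightarrow> mob \<Rightarrow> complex poly \<Rightarrow> complex poly \<Rightarrow> complex poly \<times> complex poly" where
  "conj_mob d N P Q = (case N of (a,b,c,e) \<Rightarrow>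
      let X' = [:-b, e:]; Y' = [:a, -c:];
          U = hform_subst d P X' Y'; V = hform_subst d Q X' Y'
      in (smult a U + smult b V, smult c U + smult e V))"

definition conjF :: "nat \<Rightarrow> (nat \<Rightarrow> mob) \<Rightarrow> (nat \<Rightarrow> complex poly) \<Rightarrow> (nat \<Rightarrow> complex poly) \<Rightarrow> nat \<Rightarrow> complex poly" where
  "conjF d N P Q = (\<lambda>n. fst (conj_mob d (N n) (P n) (Q n)))"

definition conjG :: "nat \<Rightarrow> (nat \<Rightarrow> mob) \<Rightarrow> (nat \<Rightarrow> complex poly) \<Rightarrow> (nat \<Rightarrow> complex poly) \<Rightarrow> nat \<Rightarrow> complex poly" where
  "conjG d N P Q = (\<lambda>n. snd (conj_mob d (N n) (P n) (Q n)))"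

definition complex_mob_seq :: "(nat \<Rightarrow> mob) \<Rightarrow> bool" where
  "complex_mob_seq M \<longleftrightarrow> (\<forall>n. mob_det (M n) \<noteq> 0)"

definition mob_H :: "nat filter \<Rightarrow> (nat \<Rightarrow> real) \<Rightarrow> (nat \<Rightarrow> mob) \<Rightarrow> bool" where
  "mob_H U \<eta> N \<longleftrightarrow>
     in_H U \<eta> (\<lambda>n. case N n of (a,b,c,e) \<Rightarrow> a) \<and> in_H U \<eta> (\<lambda>n. case N n of (a,b,c,e) \<Rightarrow> b) \<and>
     in_H U \<eta> (\<lambda>n. case N n of (a,b,c,e) \<Rightarrow> c) \<and> in_H U \<eta> (\<lambda>n. case N n of (a,b,c,e) \<Rightarrow> e) \<and>
     \<not> hzero U \<eta> (\<lambda>n. mob_det (N n))"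

definition form_H :: "nat filter \<Rightarrow> (nat \<Rightarrow> real) \<Rightarrow> nat \<Rightarrow> (nat \<Rightarrow> complex poly) \<Rightarrow> bool" where
  "form_H U \<epsilon> d F \<longleftrightarrow> (\<forall>n. degree (F n) \<le> d) \<and> (\<forall>k. in_H U \<epsilon> (\<lambda>n. coeff (F n) k))"

definition feq :: "nat filter \<Rightarrow> (nat \<Rightarrow> real) \<Rightarrow> (nat \<Rightarrow> complex poly) \<Rightarrow> (nat \<Rightarrow> complex poly) \<Rightarrow> bool" where
  "feq U \<epsilon> F G \<longleftrightarrow> (\<forall>k. heq U \<epsilon> (\<lambda>n. coeff (F n) k) (\<lambda>n. coeff (G n) k))"

text \<open>Two forms of degree d over H_eps without common zero in P^1 (coprime).\<close>
definition coprime_H :: "nat filter \<Rightarrow> (nat \<Rightarrow> real) \<Rightarrow> nat \<Rightarrow> (nat \<Rightarrow> complex poly) \<Rightarrow> (nat \<Rightarrow> complex poly) \<Rightarrow> bool" where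
  "coprime_H U \<epsilon> d A B \<longleftrightarrow>
     (if d = 0 then \<not> (hzero U \<epsilon> (\<lambda>n. coeff (A n) 0) \<and> hzero U \<epsilon> (\<lambda>n. coeff (B n) 0))
      else \<not> hzero U \<epsilon> (\<lambda>n. hres d (A n) (B n)))"

text \<open>Normalisation of [P:Q] so that coefficients have maximal modulus 1.\<close>
definition maxmod :: "nat \<Rightarrow> complex poly \<Rightarrow> complex poly \<Rightarrow> real" where
  "maxmod d P Q = Max ((\<lambda>k. cmod (coeff P k)) ` {..d} \<union> (\<lambda>k. cmod (coeff Q k)) ` {..d})"

definition normF :: "nat \<Rightarrow> (nat \<Rightarrow> complex poly) \<Rightarrow> (nat \<Rightarrow> complex poly) \<Rightarrow> nat \<Rightarrow> complex poly" where
  "normF d P Q = (\<lambda>n. smult (complex_of_real (1 / maxmod d (P n) (Q n))) (P n))"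

definition normG :: "nat \<Rightarrow> (nat \<Rightarrow> complex poly) \<Rightarrow> (nat \<Rightarrow> complex poly) \<Rightarrow> nat \<Rightarrow> complex poly" where
  "normG d P Q = (\<lambda>n. smult (complex_of_real (1 / maxmod d (P n) (Q n))) (Q n))"

text \<open>[A:B] (forms of degree delta over H_eps) is the limit g_eps of the sequence [P_n:Q_n] of
  degree-d maps: P_eps = H*A, Q_eps = H*B with A,B coprime, i.e. [A:B] is [P_eps:Q_eps]
  divided by their gcd H.\<close>
definition is_limit :: "nat filter \<Rightarrow> (nat \<Rightarrow> real) \<Rightarrow> nat \<Rightarrow> (nat \<Rightarrow> complex poly) \<Rightarrow> (nat \<Rightarrow> complex poly)
    \<Rightarrow> nat \<Rightarrow> (nat \<Rightarrow> complex poly) \<Rightarrow> (nat \<Rightarrow> complex poly) \<Rightarrow> bool" where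
  "is_limit U \<epsilon> d P Q \<delta> A B \<longleftrightarrow> \<delta> \<le> d \<and> form_H U \<epsilon> \<delta> A \<and> form_H U \<epsilon> \<delta> B \<and> coprime_H U \<epsilon> \<delta> A B \<and>
     (\<exists>H. form_H U \<epsilon> (d - \<delta>) H \<and> feq U \<epsilon> (normF d P Q) (\<lambda>n. H n * A n)
                                 \<and> feq U \<epsilon> (normG d P Q) (\<lambda>n. H n * B n))"

definition maxcoef :: "nat filter \<Rightarrow> (nat \<Rightarrow> real) \<Rightarrow> nat \<Rightarrow> (nat \<Rightarrow> complex poly) \<Rightarrow> (nat \<Rightarrow> complex poly) \<Rightarrow> ereal" where
  "maxcoef U \<epsilon> d A B = Max ((\<lambda>k. hnorm U \<epsilon> (\<lambda>n. coeff (A n) k)) ` {..d}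
                          \<union> (\<lambda>k. hnorm U \<epsilon> (\<lambda>n. coeff (B n) k)) ` {..d})"

text \<open>|Res(g)| = |Res(A,B)| / max|coeff|^(2d) = 1.\<close>
definition good_red :: "nat filter \<Rightarrow> (nat \<Rightarrow> real) \<Rightarrow> nat \<Rightarrow> (nat \<Rightarrow> complex poly) \<Rightarrow> (nat \<Rightarrow> complex poly) \<Rightarrow> bool" where
  "good_red U \<epsilon> d A B \<longleftrightarrow> hnorm U \<epsilon> (\<lambda>n. hres d (A n) (B n)) = maxcoef U \<epsilon> d A B ^ (2*d)"

text \<open>Potential good reduction; by convention never over H_(1) = C.\<close>
definition pot_good_red :: "nat filter \<Rightarrow> (nat \<Rightarrow> real) \<Rightarrow> nat \<Rightarrow> (nat \<Rightarrow> complex poly) \<Rightarrow> (nat \<Rightarrow> complex poly) \<Rightarrow> bool" where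
  "pot_good_red U \<epsilon> d A B \<longleftrightarrow> \<not> scale_equiv U \<epsilon> one_scale \<and>
     (\<exists>N. mob_H U \<epsilon> N \<and> good_red U \<epsilon> d (conjF d N A B) (conjG d N A B))"

definition normalized_H :: "nat filter \<Rightarrow> (nat \<Rightarrow> real) \<Rightarrow> nat \<Rightarrow> (nat \<Rightarrow> complex poly) \<Rightarrow> (nat \<Rightarrow> complex poly) \<Rightarrow> bool" where
  "normalized_H U \<epsilon> d A B \<longleftrightarrow> maxcoef U \<epsilon> d A B = 1"

text \<open>For normalised [A:B] over H_eps (eps < (1)): g fixes the Gauss point x_g with local degree 1,
  i.e. the reduction [A~:B~] equals H~ * [a~:b~] with [a~:b~] of degree exactly 1.
  Residue field elements: z with |z| <= 1, z~ = 0 iff |z| < 1.\<close>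
definition fixes_gauss_ldeg1 :: "nat filter \<Rightarrow> (nat \<Rightarrow> real) \<Rightarrow> nat \<Rightarrow> (nat \<Rightarrow> complex poly) \<Rightarrow> (nat \<Rightarrow> complex poly) \<Rightarrow> bool" where
  "fixes_gauss_ldeg1 U \<epsilon> d A B \<longleftrightarrow> 1 \<le> d \<and>
     (\<exists>H a b. (\<forall>n. degree (H n) \<le> d - 1 \<and> degree (a n) \<le> 1 \<and> degree (b n) \<le> 1) \<and>
        (\<forall>k. hnorm U \<epsilon> (\<lambda>n. coeff (H n) k) \<le> 1 \<and> hnorm U \<epsilon> (\<lambda>n. coeff (a n) k) \<le> 1
             \<and> hnorm U \<epsilon> (\<lambda>n. coeff (b n) k) \<le> 1) \<and>
        (\<forall>k. hnorm U \<epsilon> (\<lambda>n. coeff (A n) k - coeff (H n * a n) k) < 1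
             \<and> hnorm U \<epsilon> (\<lambda>n. coeff (B n) k - coeff (H n * b n) k) < 1) \<and>
        hnorm U \<epsilon> (\<lambda>n. hres 1 (a n) (b n)) = 1)"

text \<open>Coordinates (x_n : y_n) with |x_n|,|y_n| <= 1, one of them of modulus 1: a point of
  P^1 of the residue field of H_eps (a direction at x_g), and also, via the canonical map,
  a point of P^1(H_eta).\<close>
definition dir_rep :: "(nat \<Rightarrow> complex) \<Rightarrow> (nat \<Rightarrow> complex) \<Rightarrow> bool" where
  "dir_rep x y \<longleftrightarrow> (\<forall>n. cmod (x n) \<le> 1 \<and> cmod (y n) \<le> 1 \<and> max (cmod (x n)) (cmod (y n)) = 1)"

text \<open>Bad direction at the fixed Gauss point for normalised [A:B]: a common zero of the
  reductions A~, B~ (a zero of their gcd).\<close>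
definition bad_dir :: "nat filter \<Rightarrow> (nat \<Rightarrow> real) \<Rightarrow> nat \<Rightarrow> (nat \<Rightarrow> complex poly) \<Rightarrow> (nat \<Rightarrow> complex poly)
    \<Rightarrow> (nat \<Rightarrow> complex) \<Rightarrow> (nat \<Rightarrow> complex) \<Rightarrow> bool" where
  "bad_dir U \<epsilon> d A B x y \<longleftrightarrow>
     hnorm U \<epsilon> (\<lambda>n. hform_eval d (A n) (x n) (y n)) < 1 \<and>
     hnorm U \<epsilon> (\<lambda>n. hform_eval d (B n) (x n) (y n)) < 1"

fun orbit_pt :: "nat \<Rightarrow> (nat \<Rightarrow> complex poly) \<Rightarrow> (nat \<Rightarrow> complex poly) \<Rightarrow> (nat \<Rightarrow> complex) \<Rightarrow> (nat \<Rightarrow> complex)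
    \<Rightarrow> nat \<Rightarrow> (nat \<Rightarrow> complex) \<times> (nat \<Rightarrow> complex)" where
  "orbit_pt d A B x y 0 = (x, y)"
| "orbit_pt d A B x y (Suc k) = (let p = orbit_pt d A B x y k in
      (\<lambda>n. hform_eval d (A n) (fst p n) (snd p n), \<lambda>n. hform_eval d (B n) (fst p n) (snd p n)))"

definition proj_eq :: "nat filter \<Rightarrow> (nat \<Rightarrow> real) \<Rightarrow> (nat \<Rightarrow> complex) \<times> (nat \<Rightarrow> complex)
    \<Rightarrow> (nat \<Rightarrow> complex) \<times> (nat \<Rightarrow> complex) \<Rightarrow> bool" where
  "proj_eq U \<eta> p q \<longleftrightarrow> hzero U \<eta> (\<lambda>n. fst p n * snd q n - snd p n * fst q n)"

definition infinite_orbit :: "nat filter \<Rightarrow> (nat \<Rightarrow> real) \<Rightarrow> nat \<Rightarrow> (nat \<Rightarrow> complex poly) \<Rightarrow> (nat \<Rightarrow> complex poly)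
    \<Rightarrow> (nat \<Rightarrow> complex) \<Rightarrow> (nat \<Rightarrow> complex) \<Rightarrow> bool" where
  "infinite_orbit U \<eta> d A B x y \<longleftrightarrow>
     (\<forall>j k. j < k \<longrightarrow> \<not> proj_eq U \<eta> (orbit_pt d A B x y j) (orbit_pt d A B x y k))"

definition g_rescaling :: "(nat \<Rightarrow> mob) \<Rightarrow> (nat \<Rightarrow> real) \<Rightarrow> bool" where
  "g_rescaling M \<eta> \<longleftrightarrow> complex_mob_seq M \<and> is_scale \<eta>"

definition adapted :: "nat filter \<Rightarrow> nat \<Rightarrow> (nat \<Rightarrow> complex poly) \<Rightarrow> (nat \<Rightarrow> complex poly)
    \<Rightarrow> (nat \<Rightarrow> mob) \<Rightarrow> (nat \<Rightarrow> real) \<Rightarrow> bool" where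
  "adapted U d P Q M \<eta> \<longleftrightarrow>
     (let F = conjF d M P Q; G = conjG d M P Q in
       \<comment> \<open>(A1)\<close>
       (\<exists>\<delta> A B. 1 \<le> \<delta> \<and> is_limit U \<eta> d F G \<delta> A B) \<and>
       \<comment> \<open>(A2)\<close>
       (scale_less U \<eta> one_scale \<longrightarrow>
          (\<forall>\<delta> A B. is_limit U \<eta> d F G \<delta> A B \<longrightarrow> \<not> pot_good_red U \<eta> \<delta> A B)) \<and>
       \<comment> \<open>(A3)\<close>
       (\<forall>A B. is_limit U \<eta> d F G 1 A B \<longrightarrow>
          (\<exists>\<epsilon>. is_scale \<epsilon> \<and> scale_less U \<epsilon> \<eta> \<and>
             (\<exists>\<delta>' A' B'. is_limit U \<epsilon> d F G \<delta>' A' B' \<and> normalized_H U \<epsilon> \<delta>' A' B' \<and>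
                fixes_gauss_ldeg1 U \<epsilon> \<delta>' A' B' \<and>
                (\<exists>x y. dir_rep x y \<and> bad_dir U \<epsilon> \<delta>' A' B' x y \<and> infinite_orbit U \<eta> 1 A B x y)))))"

end

theory Submission
  imports Defs "HOL-Computational_Algebra.Fundamental_Theorem_Algebra" "HOL-Computational_Algebra.Field_as_Ring"
begin

lemma ulim_tendsto:
  assumes "nonprincipal_ultrafilter U"
  shows "(x \<longlongrightarrow> ulim U x) U"
proof -
  have bot: "U \<noteq> bot" using assms unfolding nonprincipal_ultrafilter_def by auto
  have uf: "\<And>P. eventually P U \<or> eventually (\<lambda>n. \<not> P n) U"
  proof -
    fix P :: "nat \<Rightarrow> bool"
    have "eventually (\<lambda>n. n \<in> {n. P n}) U \<or> eventually (\<lambda>n. n \<notin> {n. P n}) U"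
      using assms unfolding nonprincipal_ultrafilter_def by blast
    thus "eventually P U \<or> eventually (\<lambda>n. \<not> P n) U" by simp
  qed
  let ?L = "Limsup U x"
  have "(x \<longlongrightarrow> ?L) U"
  proof (rule order_tendstoI)
    fix y assume "y < ?L"
    show "eventually (\<lambda>n. y < x n) U"
    proof (rule ccontr)
      assume "\<not> eventually (\<lambda>n. y < x n) U"
      then have "eventually (\<lambda>n. x n \<le> y) U" using uf[of "\<lambda>n. y < x n"] by (simp add: not_less)
      then have "?L \<le> y" by (rule Limsup_bounded)
      with \<open>y < ?L\<close> show False by simp
    qed
  next
    fix y assume "?L < y"
    then show "eventually (\<lambda>n. x n < y) U" by (rule Limsup_lessD)
  qed
  then show ?thesis unfolding ulim_def using bot by (simp add: tendsto_Lim)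
qed

definition vv :: "(nat \<Rightarrow> real) \<Rightarrow> (nat \<Rightarrow> complex) \<Rightarrow> nat \<Rightarrow> real" where
  "vv \<eta> z n = cmod (z n) powr \<eta> n"

lemma vv_nonneg: "0 \<le> vv \<eta> z n" unfolding vv_def by simp

locale ctx =
  fixes U :: "nat filter" and \<eta> :: "nat \<Rightarrow> real"
  assumes uf: "nonprincipal_ultrafilter U"
    and pos: "\<And>n. 0 < \<eta> n"
    and lim0: "(\<eta> \<longlongrightarrow> 0) U"
begin

definition conv :: "(nat \<Rightarrow> complex) \<Rightarrow> real \<Rightarrow> bool" where
  "conv z r \<longleftrightarrow> (vv \<eta> z \<longlongrightarrow> r) U"

definition bnd :: "(nat \<Rightarrow> complex) \<Rightarrow> bool" where
  "bnd z \<longleftrightarrow> (\<exists>r. conv z r)"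

definition sml :: "(nat \<Rightarrow> complex) \<Rightarrow> bool" where
  "sml z \<longleftrightarrow> conv z 0"

definition eqv :: "(nat \<Rightarrow> complex) \<Rightarrow> (nat \<Rightarrow> complex) \<Rightarrow> bool" where
  "eqv z w \<longleftrightarrow> sml (\<lambda>n. z n - w n)"

lemma bot: "U \<noteq> bot" using uf unfolding nonprincipal_ultrafilter_def by auto

lemma ev_le1: "eventually (\<lambda>n. \<eta> n < 1) U"
  using lim0 by (rule order_tendstoD) simp

lemma conv_nonneg: "conv z r \<Longrightarrow> 0 \<le> r"
  unfolding conv_def
  by (rule tendsto_lowerbound[OF _ _ bot]) (auto simp: vv_nonneg)

lemma conv_unique: "conv z r \<Longrightarrow> conv z s \<Longrightarrow> r = s"
  unfolding conv_def using tendsto_unique[OF bot] by blast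

lemma conv_hval: "conv z r \<Longrightarrow> hval U \<eta> z = ereal r"
  unfolding conv_def hval_def ulim_def
  by (rule tendsto_Lim) (auto simp: bot vv_def[abs_def])

lemma hnorm_hval: "hnorm U \<eta> z = hval U \<eta> z"
  unfolding hnorm_def hval_def ulim_def
proof (rule Lim_cong)
  show "\<forall>\<^sub>F x in U. ereal (cmod (z x) powr min 1 (\<eta> x)) = ereal (cmod (z x) powr \<eta> x)"
    using ev_le1 by eventually_elim simp
qed simp

lemma inH_iff: "in_H U \<eta> z \<longleftrightarrow> bnd z"
proof
  assume h: "in_H U \<eta> z"
  let ?x = "\<lambda>n. ereal (cmod (z n) powr \<eta> n)"
  have t: "(?x \<longlongrightarrow> hval U \<eta> z) U" unfolding hval_def by (rule ulim_tendsto[OF uf])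
  have "0 \<le> hval U \<eta> z"
    by (rule tendsto_lowerbound[OF t _ bot]) simp
  moreover have "hval U \<eta> z < \<infinity>" using h unfolding in_H_def .
  ultimately obtain r where r: "hval U \<eta> z = ereal r" by (cases "hval U \<eta> z") auto
  then show "bnd z" using t unfolding bnd_def conv_def vv_def[abs_def] by auto
next
  assume "bnd z"
  then obtain r where "conv z r" unfolding bnd_def by auto
  then show "in_H U \<eta> z" unfolding in_H_def using conv_hval by simp
qed

lemma hzero_iff: "hzero U \<eta> z \<longleftrightarrow> sml z"
proof
  assume h: "hzero U \<eta> z"
  let ?x = "\<lambda>n. ereal (cmod (z n) powr \<eta> n)"
  have t: "(?x \<longlongrightarrow> 0) U" using ulim_tendsto[OF uf, of ?x] h unfolding hzero_def hval_def by simp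
  then have "(?x \<longlongrightarrow> ereal 0) U" by (simp add: zero_ereal_def)
  then show "sml z" unfolding sml_def conv_def vv_def[abs_def] by simp
next
  assume "sml z"
  then have "conv z 0" unfolding sml_def .
  then show "hzero U \<eta> z" unfolding hzero_def using conv_hval by (simp add: zero_ereal_def)
qed

lemma heq_iff: "heq U \<eta> z w \<longleftrightarrow> eqv z w"
  unfolding heq_def eqv_def hzero_iff ..

lemma bnd_ev: "bnd z \<Longrightarrow> \<exists>C. eventually (\<lambda>n. vv \<eta> z n \<le> C) U"
  unfolding bnd_def conv_def
proof (elim exE)
  fix r assume "(vv \<eta> z \<longlongrightarrow> r) U"
  then have "eventually (\<lambda>n. vv \<eta> z n < r + 1) U" by (rule order_tendstoD) simp
  then show ?thesis by (auto elim: eventually_mono intro!: exI[of _ "r+1"])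
qed

lemma conv_const: "conv (\<lambda>n. c) (if c = 0 then 0 else 1)"
proof (cases "c = 0")
  case True then show ?thesis unfolding conv_def vv_def by simp
next
  case False
  have "((\<lambda>n. cmod c powr \<eta> n) \<longlongrightarrow> cmod c powr 0) U"
    by (rule tendsto_powr) (use False lim0 in auto)
  then show ?thesis using False unfolding conv_def vv_def[abs_def] by simp
qed

lemma bnd_const: "bnd (\<lambda>n. c)" unfolding bnd_def using conv_const by blast

lemma conv_mult: "conv z r \<Longrightarrow> conv w s \<Longrightarrow> conv (\<lambda>n. z n * w n) (r * s)"
  unfolding conv_def vv_def[abs_def] by (simp add: norm_mult powr_mult tendsto_mult)

lemma vv_add_le:
  assumes "\<eta> n < 1"
  shows "vv \<eta> (\<lambda>n. z n + w n) n \<le> 2 * max (vv \<eta> z n) (vv \<eta> w n)"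
proof -
  let ?m = "max (cmod (z n)) (cmod (w n))"
  have "cmod (z n + w n) \<le> 2 * ?m" using norm_triangle_ineq[of "z n" "w n"] by linarith
  then have "cmod (z n + w n) powr \<eta> n \<le> (2 * ?m) powr \<eta> n"
    using pos[of n] by (intro powr_mono2) auto
  also have "\<dots> = 2 powr \<eta> n * ?m powr \<eta> n" by (simp add: powr_mult)
  also have "\<dots> \<le> 2 * ?m powr \<eta> n"
  proof (rule mult_right_mono)
    have "2 powr \<eta> n \<le> 2 powr (1::real)" using assms by (intro powr_mono) auto
    then show "2 powr \<eta> n \<le> 2" by simp
  qed simp
  also have "?m powr \<eta> n = max (cmod (z n) powr \<eta> n) (cmod (w n) powr \<eta> n)"
  proof (cases "cmod (z n) \<le> cmod (w n)")
    case True
    then show ?thesis using pos[of n] powr_mono2[of "\<eta> n" "cmod (z n)" "cmod (w n)"] by (simp add: max_def)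
  next
    case False
    then show ?thesis using pos[of n] powr_mono2[of "\<eta> n" "cmod (w n)" "cmod (z n)"] by (simp add: max_def)
  qed
  finally show ?thesis unfolding vv_def .
qed

lemma vv_add_le2:
  shows "vv \<eta> (\<lambda>n. z n + w n) n \<le> 2 powr \<eta> n * max (vv \<eta> z n) (vv \<eta> w n)"
proof -
  let ?m = "max (cmod (z n)) (cmod (w n))"
  have "cmod (z n + w n) \<le> 2 * ?m" using norm_triangle_ineq[of "z n" "w n"] by linarith
  then have "cmod (z n + w n) powr \<eta> n \<le> (2 * ?m) powr \<eta> n"
    using pos[of n] by (intro powr_mono2) auto
  also have "\<dots> = 2 powr \<eta> n * ?m powr \<eta> n" by (simp add: powr_mult)
  also have "?m powr \<eta> n = max (cmod (z n) powr \<eta> n) (cmod (w n) powr \<eta> n)"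
  proof (cases "cmod (z n) \<le> cmod (w n)")
    case True
    then show ?thesis using pos[of n] powr_mono2[of "\<eta> n" "cmod (z n)" "cmod (w n)"] by (simp add: max_def)
  next
    case False
    then show ?thesis using pos[of n] powr_mono2[of "\<eta> n" "cmod (w n)" "cmod (z n)"] by (simp add: max_def)
  qed
  finally show ?thesis unfolding vv_def .
qed

lemma vv_uminus: "vv \<eta> (\<lambda>n. - z n) = vv \<eta> z" unfolding vv_def[abs_def] by simp

lemma conv_uminus: "conv (\<lambda>n. - z n) r = conv z r" unfolding conv_def vv_uminus ..


lemma ev_bnd: "eventually (\<lambda>n. vv \<eta> z n \<le> C) U \<Longrightarrow> bnd z"
proof -
  assume h: "eventually (\<lambda>n. vv \<eta> z n \<le> C) U"
  let ?x = "\<lambda>n. ereal (cmod (z n) powr \<eta> n)"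
  have t: "(?x \<longlongrightarrow> hval U \<eta> z) U" unfolding hval_def by (rule ulim_tendsto[OF uf])
  have "hval U \<eta> z \<le> ereal C"
    by (rule tendsto_upperbound[OF t _ bot]) (use h in \<open>auto simp: vv_def elim: eventually_mono\<close>)
  then have "hval U \<eta> z < \<infinity>" by (rule le_less_trans) simp
  then have "in_H U \<eta> z" unfolding in_H_def .
  then show ?thesis using inH_iff by simp
qed

lemma sml_ev: "(\<And>e. e > 0 \<Longrightarrow> eventually (\<lambda>n. vv \<eta> z n < e) U) \<Longrightarrow> sml z"
  unfolding sml_def conv_def
proof (rule order_tendstoI)
  fix y :: real assume "y < 0" then show "eventually (\<lambda>n. y < vv \<eta> z n) U"
    using vv_nonneg[of \<eta> z] by (intro always_eventually allI) (meson less_le_trans)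
qed

lemma sml_evD: "sml z \<Longrightarrow> e > 0 \<Longrightarrow> eventually (\<lambda>n. vv \<eta> z n < e) U"
  unfolding sml_def conv_def by (rule order_tendstoD)

lemma sml_bnd: "sml z \<Longrightarrow> bnd z" unfolding sml_def bnd_def by blast

lemma sml_add: assumes "sml z" "sml w" shows "sml (\<lambda>n. z n + w n)"
proof (rule sml_ev)
  fix e :: real assume e: "e > 0"
  have "eventually (\<lambda>n. vv \<eta> z n < e/2) U" using assms(1) e by (intro sml_evD) auto
  moreover have "eventually (\<lambda>n. vv \<eta> w n < e/2) U" using assms(2) e by (intro sml_evD) auto
  ultimately show "eventually (\<lambda>n. vv \<eta> (\<lambda>n. z n + w n) n < e) U" using ev_le1
  proof eventually_elim
    case (elim n)
    then show ?case using vv_add_le[of n z w] by linarith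
  qed
qed

lemma bnd_add: assumes "bnd z" "bnd w" shows "bnd (\<lambda>n. z n + w n)"
proof -
  obtain C1 where 1: "eventually (\<lambda>n. vv \<eta> z n \<le> C1) U" using bnd_ev[OF assms(1)] by auto
  obtain C2 where 2: "eventually (\<lambda>n. vv \<eta> w n \<le> C2) U" using bnd_ev[OF assms(2)] by auto
  have "eventually (\<lambda>n. vv \<eta> (\<lambda>n. z n + w n) n \<le> 2 * max C1 C2) U" using 1 2 ev_le1
  proof eventually_elim
    case (elim n)
    then show ?case using vv_add_le[of n z w] by linarith
  qed
  then show ?thesis by (rule ev_bnd)
qed

lemma bnd_mult: "bnd z \<Longrightarrow> bnd w \<Longrightarrow> bnd (\<lambda>n. z n * w n)"
  unfolding bnd_def using conv_mult by blast

lemma sml_mult: "sml z \<Longrightarrow> bnd w \<Longrightarrow> sml (\<lambda>n. z n * w n)"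
  unfolding bnd_def sml_def using conv_mult by fastforce

lemma sml_mult': "bnd z \<Longrightarrow> sml w \<Longrightarrow> sml (\<lambda>n. z n * w n)"
  using sml_mult[of w z] by (simp add: mult.commute)

lemma bnd_uminus: "bnd (\<lambda>n. - z n) = bnd z" unfolding bnd_def conv_uminus ..
lemma sml_uminus: "sml (\<lambda>n. - z n) = sml z" unfolding sml_def conv_uminus ..

lemma bnd_diff: "bnd z \<Longrightarrow> bnd w \<Longrightarrow> bnd (\<lambda>n. z n - w n)"
  using bnd_add[of z "\<lambda>n. - w n"] by (simp add: bnd_uminus)

lemma sml_diff: "sml z \<Longrightarrow> sml w \<Longrightarrow> sml (\<lambda>n. z n - w n)"
  using sml_add[of z "\<lambda>n. - w n"] by (simp add: sml_uminus)

lemma sml_zero: "sml (\<lambda>n. 0)" using conv_const[of 0] unfolding sml_def by simp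

lemma sml_cong: "sml z \<Longrightarrow> (\<And>n. z n = w n) \<Longrightarrow> sml w"
proof -
  assume "sml z" "\<And>n. z n = w n"
  then have "z = w" by auto
  with \<open>sml z\<close> show ?thesis by simp
qed

lemma eqv_refl: "eqv z z" unfolding eqv_def using sml_zero by simp

lemma eqv_sym: "eqv z w \<Longrightarrow> eqv w z"
  unfolding eqv_def using sml_uminus[of "\<lambda>n. z n - w n"] by simp

lemma eqv_trans: "eqv z w \<Longrightarrow> eqv w u \<Longrightarrow> eqv z u"
  unfolding eqv_def using sml_add[of "\<lambda>n. z n - w n" "\<lambda>n. w n - u n"] by simp

lemma eqv_bnd: "eqv z w \<Longrightarrow> bnd w \<Longrightarrow> bnd z"
  unfolding eqv_def using bnd_add[of "\<lambda>n. z n - w n" w] sml_bnd by simp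

lemma eqv_add: "eqv z z' \<Longrightarrow> eqv w w' \<Longrightarrow> eqv (\<lambda>n. z n + w n) (\<lambda>n. z' n + w' n)"
  unfolding eqv_def using sml_add[of "\<lambda>n. z n - z' n" "\<lambda>n. w n - w' n"]
  by (simp add: algebra_simps)

lemma eqv_diff: "eqv z z' \<Longrightarrow> eqv w w' \<Longrightarrow> eqv (\<lambda>n. z n - w n) (\<lambda>n. z' n - w' n)"
  unfolding eqv_def using sml_diff[of "\<lambda>n. z n - z' n" "\<lambda>n. w n - w' n"]
  by (simp add: algebra_simps)

lemma eqv_mult:
  assumes "eqv z z'" "eqv w w'" "bnd z'" "bnd w"
  shows "eqv (\<lambda>n. z n * w n) (\<lambda>n. z' n * w' n)"
proof -
  have "sml (\<lambda>n. (z n - z' n) * w n + z' n * (w n - w' n))"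
    using assms unfolding eqv_def by (intro sml_add sml_mult sml_mult')
  then show ?thesis unfolding eqv_def by (simp add: algebra_simps)
qed

lemma conv_eqv:
  assumes "eqv z w" "conv w s" shows "conv z s"
proof -
  have "bnd z" using assms eqv_bnd unfolding bnd_def by blast
  then obtain r where r: "conv z r" unfolding bnd_def by auto
  have d: "conv (\<lambda>n. z n - w n) 0" using assms(1) unfolding eqv_def sml_def .
  have d': "conv (\<lambda>n. w n - z n) 0" using assms(1) eqv_sym unfolding eqv_def sml_def by blast
  have two: "((\<lambda>n. 2 powr \<eta> n) \<longlongrightarrow> 2 powr 0) U" by (rule tendsto_powr) (use lim0 in auto)
  have "r \<le> 1 * max s 0"
  proof (rule tendsto_le[OF bot])
    show "((\<lambda>n. 2 powr \<eta> n * max (vv \<eta> w n) (vv \<eta> (\<lambda>n. z n - w n) n)) \<longlongrightarrow> 1 * max s 0) U"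
      using two assms(2) d unfolding conv_def by (intro tendsto_mult tendsto_max) simp_all
    show "(vv \<eta> z \<longlongrightarrow> r) U" using r unfolding conv_def .
    show "\<forall>\<^sub>F n in U. vv \<eta> z n \<le> 2 powr \<eta> n * max (vv \<eta> w n) (vv \<eta> (\<lambda>n. z n - w n) n)"
      using vv_add_le2[of w "\<lambda>n. z n - w n"] by (auto intro!: always_eventually)
  qed
  moreover have "s \<le> 1 * max r 0"
  proof (rule tendsto_le[OF bot])
    show "((\<lambda>n. 2 powr \<eta> n * max (vv \<eta> z n) (vv \<eta> (\<lambda>n. w n - z n) n)) \<longlongrightarrow> 1 * max r 0) U"
      using two r d' unfolding conv_def by (intro tendsto_mult tendsto_max) simp_all
    show "(vv \<eta> w \<longlongrightarrow> s) U" using assms(2) unfolding conv_def .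
    show "\<forall>\<^sub>F n in U. vv \<eta> w n \<le> 2 powr \<eta> n * max (vv \<eta> z n) (vv \<eta> (\<lambda>n. w n - z n) n)"
      using vv_add_le2[of z "\<lambda>n. w n - z n"] by (auto intro!: always_eventually)
  qed
  ultimately have "r = s" using conv_nonneg[OF r] conv_nonneg[OF assms(2)] by simp
  then show ?thesis using r by simp
qed

lemma cancel:
  assumes "sml (\<lambda>n. z n * w n)" "bnd z" "bnd w" "\<not> sml z"
  shows "sml w"
proof -
  obtain r s where r: "conv z r" and s: "conv w s" using assms(2,3) unfolding bnd_def by auto
  have "r \<noteq> 0" using r assms(4) unfolding sml_def by auto
  have "conv (\<lambda>n. z n * w n) (r * s)" using r s by (rule conv_mult)
  then have "r * s = 0" using assms(1) conv_unique unfolding sml_def by blast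
  then have "s = 0" using \<open>r \<noteq> 0\<close> by simp
  then show ?thesis using s unfolding sml_def by simp
qed

lemma conv_power: "conv z r \<Longrightarrow> conv (\<lambda>n. z n ^ m) (r ^ m)"
proof (induction m)
  case 0 then show ?case using conv_const[of 1] by simp
next
  case (Suc m) then show ?case using conv_mult[of z r "\<lambda>n. z n ^ m" "r^m"] by simp
qed

lemma bnd_power: "bnd z \<Longrightarrow> bnd (\<lambda>n. z n ^ m)"
  unfolding bnd_def using conv_power by blast

lemma sml_power_imp: assumes "sml (\<lambda>n. z n ^ m)" "bnd z" "m > 0" shows "sml z"
proof -
  obtain r where r: "conv z r" using assms(2) unfolding bnd_def by auto
  have "conv (\<lambda>n. z n ^ m) (r ^ m)" using r by (rule conv_power)
  then have "r ^ m = 0" using assms(1) conv_unique unfolding sml_def by blast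
  then have "r = 0" by simp
  then show ?thesis using r unfolding sml_def by simp
qed

lemma const_not_sml: "c \<noteq> 0 \<Longrightarrow> \<not> sml (\<lambda>n. c)"
  using conv_const[of c] conv_unique unfolding sml_def by fastforce

lemma sum_eqv:
  assumes "finite I" "\<And>i. i \<in> I \<Longrightarrow> bnd (f i) \<and> bnd (g i) \<and> eqv (f i) (g i)"
  shows "bnd (\<lambda>n. \<Sum>i\<in>I. f i n) \<and> bnd (\<lambda>n. \<Sum>i\<in>I. g i n) \<and>
         eqv (\<lambda>n. \<Sum>i\<in>I. f i n) (\<lambda>n. \<Sum>i\<in>I. g i n)"
  using assms
proof (induction I rule: finite_induct)
  case empty then show ?case using bnd_const[of 0] eqv_refl by simp
next
  case (insert x F)
  then show ?case using bnd_add eqv_add by simp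
qed

lemma prod_eqv:
  assumes "finite I" "\<And>i. i \<in> I \<Longrightarrow> bnd (f i) \<and> bnd (g i) \<and> eqv (f i) (g i)"
  shows "bnd (\<lambda>n. \<Prod>i\<in>I. f i n) \<and> bnd (\<lambda>n. \<Prod>i\<in>I. g i n) \<and>
         eqv (\<lambda>n. \<Prod>i\<in>I. f i n) (\<lambda>n. \<Prod>i\<in>I. g i n)"
  using assms
proof (induction I rule: finite_induct)
  case empty then show ?case using bnd_const[of 1] eqv_refl by simp
next
  case (insert x F)
  then show ?case using bnd_mult eqv_mult by simp
qed

lemma det_eqv:
  assumes "\<And>n. M1 n \<in> carrier_mat m m" "\<And>n. M2 n \<in> carrier_mat m m"
    and "\<And>i j. i < m \<Longrightarrow> j < m \<Longrightarrow> bnd (\<lambda>n. M1 n $$ (i,j)) \<and> bnd (\<lambda>n. M2 n $$ (i,j))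
           \<and> eqv (\<lambda>n. M1 n $$ (i,j)) (\<lambda>n. M2 n $$ (i,j))"
  shows "bnd (\<lambda>n. det (M1 n)) \<and> bnd (\<lambda>n. det (M2 n)) \<and> eqv (\<lambda>n. det (M1 n)) (\<lambda>n. det (M2 n))"
proof -
  have d1: "(\<lambda>n. det (M1 n)) = (\<lambda>n. \<Sum>p\<in>{p. p permutes {0..<m}}. signof p * (\<Prod>i = 0..<m. M1 n $$ (i, p i)))"
    using det_def'[OF assms(1)] by auto
  have d2: "(\<lambda>n. det (M2 n)) = (\<lambda>n. \<Sum>p\<in>{p. p permutes {0..<m}}. signof p * (\<Prod>i = 0..<m. M2 n $$ (i, p i)))"
    using det_def'[OF assms(2)] by auto
  show ?thesis unfolding d1 d2
  proof (rule sum_eqv[where f = "\<lambda>p n. signof p * (\<Prod>i = 0..<m. M1 n $$ (i, p i))"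
        and g = "\<lambda>p n. signof p * (\<Prod>i = 0..<m. M2 n $$ (i, p i))"])
    show "finite {p. p permutes {0..<m}}" by (simp add: finite_permutations)
    fix p assume "p \<in> {p. p permutes {0..<m}}"
    then have pm: "\<And>i. i < m \<Longrightarrow> p i < m" by (simp add: permutes_in_image)
    have "bnd (\<lambda>n. \<Prod>i = 0..<m. M1 n $$ (i, p i)) \<and> bnd (\<lambda>n. \<Prod>i = 0..<m. M2 n $$ (i, p i)) \<and>
         eqv (\<lambda>n. \<Prod>i = 0..<m. M1 n $$ (i, p i)) (\<lambda>n. \<Prod>i = 0..<m. M2 n $$ (i, p i))"
      by (rule prod_eqv[where f = "\<lambda>i n. M1 n $$ (i, p i)" and g = "\<lambda>i n. M2 n $$ (i, p i)"])
        (use assms(3) pm in auto)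
    then show "bnd (\<lambda>n. signof p * (\<Prod>i = 0..<m. M1 n $$ (i, p i))) \<and>
          bnd (\<lambda>n. signof p * (\<Prod>i = 0..<m. M2 n $$ (i, p i))) \<and>
          eqv (\<lambda>n. signof p * (\<Prod>i = 0..<m. M1 n $$ (i, p i))) (\<lambda>n. signof p * (\<Prod>i = 0..<m. M2 n $$ (i, p i)))"
      using bnd_mult[OF bnd_const] eqv_mult[OF eqv_refl _ bnd_const] by blast
  qed
qed

end

lemma hf_add: "hform_eval d (p + q) x y = hform_eval d p x y + hform_eval d q x y"
  unfolding hform_eval_def coeff_add distrib_right sum.distrib ..

lemma hf_smult: "hform_eval d (smult c p) x y = c * hform_eval d p x y"
  unfolding hform_eval_def coeff_smult sum_distrib_left mult.assoc ..

lemma hf_zero: "hform_eval d 0 x y = 0" by (simp add: hform_eval_def)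

lemma hf_sum: "hform_eval d (\<Sum>i\<in>I. f i) x y = (\<Sum>i\<in>I. hform_eval d (f i) x y)"
  by (induction I rule: infinite_finite_induct) (simp_all add: hf_add hf_zero)

lemma hf_y0: "hform_eval d R x 0 = coeff R d * x ^ d"
proof -
  have "hform_eval d R x 0 = (\<Sum>k\<in>{d}. coeff R k * x ^ k * 0 ^ (d - k))"
    unfolding hform_eval_def by (rule sum.mono_neutral_right) auto
  then show ?thesis by simp
qed

lemma hf_y:
  assumes "y \<noteq> 0" "degree R \<le> d"
  shows "hform_eval d R x y = y ^ d * poly R (x / y)"
proof -
  have "poly R (x / y) = (\<Sum>i\<le>d. coeff R i * (x / y) ^ i)"
    unfolding poly_altdef
    by (rule sum.mono_neutral_left) (use assms(2) in \<open>auto dest: le_degree\<close>)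
  then have "y ^ d * poly R (x / y) = (\<Sum>i\<le>d. coeff R i * (y ^ d * (x / y) ^ i))"
    by (simp add: sum_distrib_left algebra_simps)
  also have "\<dots> = (\<Sum>i\<le>d. coeff R i * x ^ i * y ^ (d - i))"
  proof (rule sum.cong[OF refl])
    fix i assume "i \<in> {..d}"
    then have "y ^ d = y ^ i * y ^ (d - i)" by (simp add: power_add[symmetric])
    then have "y ^ d * (x / y) ^ i = x ^ i * y ^ (d - i)"
      using assms(1) by (simp add: power_divide field_simps)
    then show "coeff R i * (y ^ d * (x / y) ^ i) = coeff R i * x ^ i * y ^ (d - i)" by simp
  qed
  finally show ?thesis unfolding hform_eval_def by simp
qed

lemma coeff_mult_bound:
  fixes p q :: "'a::idom poly"
  assumes "degree p \<le> m" "degree q \<le> k"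
  shows "coeff (p * q) (m + k) = coeff p m * coeff q k"
proof (cases "degree p = m \<and> degree q = k")
  case True then show ?thesis using coeff_mult_degree_sum[of p q] by simp
next
  case False
  then have "degree p < m \<or> degree q < k" using assms by auto
  moreover have "degree (p * q) \<le> degree p + degree q" by (rule degree_mult_le)
  ultimately have "degree (p * q) < m + k" using assms by linarith
  then have "coeff (p * q) (m + k) = 0" by (intro coeff_eq_0)
  moreover have "coeff p m * coeff q k = 0" using \<open>degree p < m \<or> degree q < k\<close> coeff_eq_0 by auto
  ultimately show ?thesis by simp
qed

lemma hf_mult:
  assumes "degree p \<le> m" "degree q \<le> k"
  shows "hform_eval (m + k) (p * q) x y = hform_eval m p x y * hform_eval k q x y"
proof (cases "y = 0")
  case True
  have "hform_eval (m + k) (p * q) x y = coeff (p * q) (m + k) * x ^ (m + k)"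
    unfolding True by (rule hf_y0)
  also have "\<dots> = (coeff p m * x ^ m) * (coeff q k * x ^ k)"
    unfolding coeff_mult_bound[OF assms] power_add by (simp only: mult_ac)
  finally show ?thesis unfolding True hf_y0 .
next
  case False
  have "degree (p * q) \<le> m + k" using degree_mult_le[of p q] assms by linarith
  then have "hform_eval (m + k) (p * q) x y = y ^ (m + k) * poly (p * q) (x / y)"
    by (rule hf_y[OF False])
  also have "\<dots> = (y ^ m * poly p (x / y)) * (y ^ k * poly q (x / y))"
    unfolding poly_mult power_add by (simp only: mult_ac)
  finally show ?thesis using hf_y[OF False assms(1)] hf_y[OF False assms(2)] by simp
qed

lemma degree_pow_le1: "degree X \<le> 1 \<Longrightarrow> degree (X ^ k) \<le> k"
proof (induction k)
  case 0 then show ?case by simp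
next
  case (Suc k)
  have "degree (X * X ^ k) \<le> degree X + degree (X ^ k)" by (rule degree_mult_le)
  then show ?case using Suc by simp
qed

lemma hf_power:
  assumes "degree X \<le> 1"
  shows "hform_eval k (X ^ k) x y = hform_eval 1 X x y ^ k"
proof (induction k)
  case 0
  have "hform_eval 0 (X ^ 0) x y = coeff (1::complex poly) 0 * x ^ 0 * y ^ 0"
    unfolding hform_eval_def by simp
  then show ?case by simp
next
  case (Suc k)
  have "hform_eval (1 + k) (X * X ^ k) x y = hform_eval 1 X x y * hform_eval k (X ^ k) x y"
    using assms degree_pow_le1[OF assms, of k] by (intro hf_mult)
  then have "hform_eval (Suc k) (X ^ Suc k) x y = hform_eval 1 X x y * hform_eval k (X ^ k) x y"
    by simp
  then show ?case using Suc.IH by simp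
qed

lemma hf_subst:
  assumes "degree X \<le> 1" "degree Y \<le> 1"
  shows "hform_eval d (hform_subst d P X Y) x y =
         hform_eval d P (hform_eval 1 X x y) (hform_eval 1 Y x y)"
proof -
  have "hform_eval d (hform_subst d P X Y) x y =
        (\<Sum>k\<le>d. coeff P k * hform_eval d (X ^ k * Y ^ (d - k)) x y)"
    unfolding hform_subst_def hf_sum hf_smult ..
  also have "\<dots> = (\<Sum>k\<le>d. coeff P k * (hform_eval 1 X x y ^ k * hform_eval 1 Y x y ^ (d - k)))"
  proof (rule sum.cong[OF refl])
    fix k assume "k \<in> {..d}"
    then have "hform_eval d (X ^ k * Y ^ (d - k)) x y = hform_eval (k + (d - k)) (X ^ k * Y ^ (d - k)) x y"
      by simp
    also have "\<dots> = hform_eval k (X ^ k) x y * hform_eval (d - k) (Y ^ (d - k)) x y"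
      using assms by (intro hf_mult degree_pow_le1)
    finally show "coeff P k * hform_eval d (X ^ k * Y ^ (d - k)) x y =
         coeff P k * (hform_eval 1 X x y ^ k * hform_eval 1 Y x y ^ (d - k))"
      using assms by (simp add: hf_power)
  qed
  finally show ?thesis unfolding hform_eval_def by (simp only: mult.assoc)
qed

lemma degree_hform_subst:
  assumes "degree X \<le> 1" "degree Y \<le> 1"
  shows "degree (hform_subst d P X Y) \<le> d"
  unfolding hform_subst_def
proof (rule degree_sum_le)
  fix k assume "k \<in> {..d}"
  have "degree (X ^ k * Y ^ (d - k)) \<le> k + (d - k)"
    using degree_mult_le[of "X^k" "Y^(d-k)"] degree_pow_le1[OF assms(1), of k] degree_pow_le1[OF assms(2), of "d-k"]
    by linarith
  then show "degree (smult (coeff P k) (X ^ k * Y ^ (d - k))) \<le> d"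
    using \<open>k \<in> {..d}\<close> degree_smult_le[of "coeff P k" "X ^ k * Y ^ (d - k)"] by simp
qed simp

lemma hf_1: "hform_eval 1 [:c0, c1:] x y = c0 * y + c1 * x"
proof -
  have "{..1::nat} = {0, 1}" by auto
  then show ?thesis unfolding hform_eval_def by simp
qed


lemma sylv_smult: "sylvester_hom d (smult c P) (smult c Q) = c \<cdot>\<^sub>m sylvester_hom d P Q"
  unfolding sylvester_hom_def by (rule eq_matI) auto

lemma hres_smult: "hres d (smult c P) (smult c Q) = c ^ (2 * d) * hres d P Q"
  unfolding hres_def sylv_smult det_smult by (simp add: sylvester_hom_def)

lemma hres_00: "d \<ge> 1 \<Longrightarrow> hres d 0 0 = 0"
  using hres_smult[of d 0 0 0] by (cases d) auto

lemma sylv_carrier: "sylvester_hom d P Q \<in> carrier_mat (2*d) (2*d)"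
  unfolding sylvester_hom_def by simp

lemma sylv_index: "i < 2*d \<Longrightarrow> j < 2*d \<Longrightarrow> sylvester_hom d P Q $$ (i,j) =
      (if i < d then (if i \<le> j \<and> j \<le> i + d then coeff P (d + i - j) else 0)
      else (if i - d \<le> j \<and> j \<le> i then coeff Q (i - j) else 0))"
  unfolding sylvester_hom_def by simp

lemma reidx:
  fixes b d N :: nat
  assumes "b + d < N"
  shows "(\<Sum>j\<in>{0..<N}. (if b \<le> j \<and> j \<le> b + d then f (b + d - j) * g j else 0)) =
         (\<Sum>k\<le>d. f k * g (b + d - k))"
proof -
  have "(\<Sum>j\<in>{0..<N}. (if b \<le> j \<and> j \<le> b + d then f (b + d - j) * g j else 0)) =
        (\<Sum>j\<in>{b..b+d}. f (b + d - j) * g j)"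
    using assms by (intro sum.mono_neutral_cong_right) auto
  also have "\<dots> = (\<Sum>k\<le>d. f k * g (b + d - k))"
    by (rule sum.reindex_bij_witness[of _ "\<lambda>k. b + d - k" "\<lambda>j. b + d - j"]) auto
  finally show ?thesis .
qed

lemma sylv_vec:
  fixes P Q :: "complex poly"
  assumes "degree P \<le> d" "degree Q \<le> d"
  shows "sylvester_hom d P Q *\<^sub>v vec (2*d) (\<lambda>j. x^(2*d-1-j) * y^j) =
         vec (2*d) (\<lambda>i. if i < d then x^(d-1-i) * y^i * hform_eval d P x y
                         else x^(2*d-1-i) * y^(i-d) * hform_eval d Q x y)"
proof (rule eq_vecI)
  fix i assume "i < dim_vec (vec (2*d) (\<lambda>i. if i < d then x^(d-1-i) * y^i * hform_eval d P x y
                         else x^(2*d-1-i) * y^(i-d) * hform_eval d Q x y))"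
  then have i: "i < 2*d" by simp
  let ?g = "\<lambda>j. x^(2*d-1-j) * y^j"
  have "(sylvester_hom d P Q *\<^sub>v vec (2*d) ?g) $ i =
        (\<Sum>j\<in>{0..<2*d}. sylvester_hom d P Q $$ (i,j) * ?g j)"
    using i sylv_carrier[of d P Q] by (simp add: scalar_prod_def)
  also have "\<dots> = (if i < d then x^(d-1-i) * y^i * hform_eval d P x y
                         else x^(2*d-1-i) * y^(i-d) * hform_eval d Q x y)"
  proof (cases "i < d")
    case True
    have "(\<Sum>j\<in>{0..<2*d}. sylvester_hom d P Q $$ (i,j) * ?g j) =
          (\<Sum>j\<in>{0..<2*d}. (if i \<le> j \<and> j \<le> i + d then coeff P (i + d - j) * ?g j else 0))"
      using True i by (intro sum.cong) (auto simp: sylv_index add.commute)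
    also have "\<dots> = (\<Sum>k\<le>d. coeff P k * ?g (i + d - k))"
      using True by (intro reidx) simp
    also have "\<dots> = (\<Sum>k\<le>d. x^(d-1-i) * y^i * (coeff P k * x ^ k * y ^ (d - k)))"
    proof (rule sum.cong[OF refl])
      fix k assume "k \<in> {..d}"
      then have e1: "2*d-1-(i+(d-k)) = (d-1-i) + k" and e2: "i+d-k = i + (d-k)" using True by auto
      show "coeff P k * ?g (i + d - k) = x^(d-1-i) * y^i * (coeff P k * x ^ k * y ^ (d - k))"
        unfolding e2 e1 power_add by (simp only: mult_ac)
    qed
    also have "\<dots> = x^(d-1-i) * y^i * hform_eval d P x y"
      unfolding hform_eval_def sum_distrib_left ..
    finally show ?thesis using True by simp
  next
    case False
    have "(\<Sum>j\<in>{0..<2*d}. sylvester_hom d P Q $$ (i,j) * ?g j) =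
          (\<Sum>j\<in>{0..<2*d}. (if (i-d) \<le> j \<and> j \<le> (i - d) + d then coeff Q ((i - d) + d - j) * ?g j else 0))"
      using False i by (intro sum.cong) (auto simp: sylv_index)
    also have "\<dots> = (\<Sum>k\<le>d. coeff Q k * ?g ((i - d) + d - k))"
      using False i by (intro reidx) simp
    also have "\<dots> = (\<Sum>k\<le>d. x^(2*d-1-i) * y^(i-d) * (coeff Q k * x ^ k * y ^ (d - k)))"
    proof (rule sum.cong[OF refl])
      fix k assume "k \<in> {..d}"
      then have e1: "2*d-1-((i-d)+(d-k)) = (2*d-1-i) + k" and e2: "(i-d)+d-k = (i-d) + (d-k)"
        using False i by auto
      show "coeff Q k * ?g ((i-d) + d - k) = x^(2*d-1-i) * y^(i-d) * (coeff Q k * x ^ k * y ^ (d - k))"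
        unfolding e2 e1 power_add by (simp only: mult_ac)
    qed
    also have "\<dots> = x^(2*d-1-i) * y^(i-d) * hform_eval d Q x y"
      unfolding hform_eval_def sum_distrib_left ..
    finally show ?thesis using False by simp
  qed
  finally show "(sylvester_hom d P Q *\<^sub>v vec (2*d) ?g) $ i =
     vec (2*d) (\<lambda>i. if i < d then x^(d-1-i) * y^i * hform_eval d P x y
                         else x^(2*d-1-i) * y^(i-d) * hform_eval d Q x y) $ i" using i by simp
qed (simp add: sylvester_hom_def)

lemma common_root_poly:
  fixes a b u v :: "complex poly"
  assumes "coeff a d \<noteq> 0" "degree a \<le> d" "u * a + v * b = 0" "degree v < d" "u \<noteq> 0 \<or> v \<noteq> 0"
  shows "\<exists>z. poly a z = 0 \<and> poly b z = 0"
proof (rule ccontr)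
  assume nc: "\<not> (\<exists>z. poly a z = 0 \<and> poly b z = 0)"
  have a0: "a \<noteq> 0" using assms(1) by auto
  have da: "degree a = d" using assms(1,2) le_degree by (metis antisym)
  have v0: "v \<noteq> 0"
  proof
    assume "v = 0"
    then have "u * a = 0" using assms(3) by simp
    then have "u = 0" using a0 by simp
    with \<open>v = 0\<close> assms(5) show False by simp
  qed
  let ?g = "gcd a b"
  have "degree ?g = 0"
  proof (rule ccontr)
    assume "degree ?g \<noteq> 0"
    then have "\<not> constant (poly ?g)" using constant_degree[of ?g] by simp
    then obtain z where z: "poly ?g z = 0" using fundamental_theorem_of_algebra by blast
    obtain k1 where "a = ?g * k1" by (meson gcd_dvd1 dvdE)
    then have "poly a z = 0" using z by (metis mult_zero_left poly_mult)
    obtain k2 where "b = ?g * k2" by (meson gcd_dvd2 dvdE)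
    then have "poly b z = 0" using z by (metis mult_zero_left poly_mult)
    note this \<open>poly a z = 0\<close>
    with nc show False by blast
  qed
  moreover have "?g \<noteq> 0" using a0 by simp
  ultimately have "is_unit ?g" using is_unit_iff_degree by blast
  then have cop: "coprime a b" using is_unit_gcd by blast
  have "a dvd v * b"
  proof -
    have "v * b = a * (- u)" using assms(3) by (simp add: algebra_simps eq_neg_iff_add_eq_0 add.commute)
    then show ?thesis by simp
  qed
  then have "a dvd v" using cop by (simp add: coprime_dvd_mult_left_iff)
  then have "degree a \<le> degree v" using v0 by (rule dvd_imp_degree_le)
  with da assms(4) show False by simp
qed

lemma coeff_monom_sum:
  fixes c :: "nat \<Rightarrow> complex"
  assumes "i0 < d"
  shows "coeff (\<Sum>i<d. monom (c i) (d - 1 - i)) (d - 1 - i0) = c i0"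
proof -
  have "coeff (\<Sum>i<d. monom (c i) (d - 1 - i)) (d - 1 - i0) = (\<Sum>i<d. if d - 1 - i = d - 1 - i0 then c i else 0)"
    by (simp add: coeff_sum coeff_monom)
  also have "\<dots> = (\<Sum>i\<in>{i0}. c i)"
    using assms by (intro sum.mono_neutral_cong_right) auto
  finally show ?thesis by simp
qed

lemma degree_monom_sum:
  fixes c :: "nat \<Rightarrow> complex"
  shows "degree (\<Sum>i<d. monom (c i) (d - 1 - i)) \<le> d - 1"
  by (rule degree_sum_le) (auto intro: order_trans[OF degree_monom_le])

lemma coeff_monom_sum_mult:
  fixes c :: "nat \<Rightarrow> complex"
  shows "coeff ((\<Sum>i<d. monom (c i) (d - 1 - i)) * p) m =
         (\<Sum>i<d. if m < d - 1 - i then 0 else c i * coeff p (m - (d - 1 - i)))"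
  by (simp only: sum_distrib_right coeff_sum coeff_monom_mult)

lemma term_eq:
  fixes p :: "complex poly"
  assumes "degree p \<le> d" "m < 2 * d" "i < d"
  shows "(if m < d - 1 - i then 0 else c * coeff p (m - (d - 1 - i))) =
         (if i \<le> 2*d-1-m \<and> 2*d-1-m \<le> i + d then coeff p (d + i - (2*d-1-m)) * c else 0)"
proof (cases "m < d - 1 - i")
  case True
  then show ?thesis using assms by auto
next
  case False
  then have e: "m - (d - 1 - i) = d + i - (2*d-1-m)" using assms by auto
  show ?thesis
  proof (cases "i \<le> 2*d-1-m")
    case True
    then show ?thesis using False e assms by auto
  next
    case False2: False
    then have "d < m - (d - 1 - i)" using assms False by auto
    then have "coeff p (m - (d - 1 - i)) = 0" using assms(1) by (intro coeff_eq_0) auto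
    then show ?thesis using False False2 by auto
  qed
qed

lemma res0_root:
  fixes a b :: "complex poly"
  assumes d: "d \<ge> 1" and da: "degree a \<le> d" and db: "degree b \<le> d" and r: "hres d a b = 0"
  shows "\<exists>x y. (x \<noteq> 0 \<or> y \<noteq> 0) \<and> hform_eval d a x y = 0 \<and> hform_eval d b x y = 0"
proof (cases "coeff a d = 0 \<and> coeff b d = 0")
  case True
  then show ?thesis by (intro exI[of _ 1] exI[of _ 0]) (simp add: hf_y0)
next
  case False
  let ?S = "sylvester_hom d a b"
  have S: "?S \<in> carrier_mat (2*d) (2*d)" by (rule sylv_carrier)
  have "det (transpose_mat ?S) = 0" using r det_transpose[OF S] unfolding hres_def by simp
  then obtain w where w: "w \<in> carrier_vec (2*d)" "w \<noteq> 0\<^sub>v (2*d)" "transpose_mat ?S *\<^sub>v w = 0\<^sub>v (2*d)"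
    using det_0_iff_vec_prod_zero[of "transpose_mat ?S" "2*d"] S by auto
  define u where "u = (\<Sum>i<d. monom (w $ i) (d - 1 - i))"
  define v where "v = (\<Sum>i<d. monom (w $ (d + i)) (d - 1 - i))"
  have du: "degree u \<le> d - 1" unfolding u_def by (rule degree_monom_sum)
  have dv: "degree v \<le> d - 1" unfolding v_def by (rule degree_monom_sum)
  have uv: "u \<noteq> 0 \<or> v \<noteq> 0"
  proof (rule ccontr)
    assume "\<not> (u \<noteq> 0 \<or> v \<noteq> 0)"
    then have u0: "u = 0" and v0: "v = 0" by auto
    have "w = 0\<^sub>v (2*d)"
    proof (rule eq_vecI)
      fix i assume "i < dim_vec (0\<^sub>v (2*d) :: complex vec)"
      then have i: "i < 2 * d" by simp
      show "w $ i = 0\<^sub>v (2*d) $ i"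
      proof (cases "i < d")
        case True
        then have "coeff u (d - 1 - i) = w $ i" unfolding u_def by (rule coeff_monom_sum)
        then show ?thesis using u0 i by simp
      next
        case False
        then have "coeff v (d - 1 - (i - d)) = w $ (d + (i - d))" unfolding v_def
          using i by (intro coeff_monom_sum[of "i - d" d "\<lambda>i. w $ (d + i)"]) simp
        then show ?thesis using v0 i False by simp
      qed
    qed (use w in simp)
    with w(2) show False by simp
  qed
  have eq: "u * a + v * b = 0"
  proof (rule poly_eqI)
    fix m
    show "coeff (u * a + v * b) m = coeff 0 m"
    proof (cases "m < 2 * d")
      case False
      have "degree (u * a) \<le> 2 * d - 1" using degree_mult_le[of u a] du da d by linarith
      moreover have "degree (v * b) \<le> 2 * d - 1" using degree_mult_le[of v b] dv db d by linarith
      ultimately have "degree (u * a + v * b) \<le> 2 * d - 1" using degree_add_le by blast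
      then have "degree (u * a + v * b) < m" using False d by linarith
      then show ?thesis by (simp only: coeff_eq_0 coeff_0)
    next
      case True
      let ?j = "2*d-1-m"
      have j: "?j < 2*d" using True by simp
      have "(transpose_mat ?S *\<^sub>v w) $ ?j = (\<Sum>i\<in>{0..<2*d}. ?S $$ (i, ?j) * w $ i)"
        using j S w(1) by (simp add: scalar_prod_def mult.commute)
      also have "\<dots> = (\<Sum>i\<in>{0..<d}. ?S $$ (i, ?j) * w $ i) + (\<Sum>i\<in>{d..<2*d}. ?S $$ (i, ?j) * w $ i)"
        by (subst sum.atLeastLessThan_concat) auto
      also have "(\<Sum>i\<in>{d..<2*d}. ?S $$ (i, ?j) * w $ i) = (\<Sum>i\<in>{0..<d}. ?S $$ (i + d, ?j) * w $ (i + d))"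
        using sum.shift_bounds_nat_ivl[of "\<lambda>i. ?S $$ (i, ?j) * w $ i" 0 d d] by (simp add: mult_2)
      also have "(\<Sum>i\<in>{0..<d}. ?S $$ (i, ?j) * w $ i) =
                 (\<Sum>i<d. if m < d - 1 - i then 0 else w $ i * coeff a (m - (d - 1 - i)))"
        unfolding atLeast0LessThan
      proof (rule sum.cong[OF refl])
        fix i assume i: "i \<in> {..<d}"
        then show "?S $$ (i, ?j) * w $ i = (if m < d - 1 - i then 0 else w $ i * coeff a (m - (d - 1 - i)))"
          using term_eq[OF da True, of i "w $ i"] j by (simp add: sylv_index)
      qed
      also have "(\<Sum>i\<in>{0..<d}. ?S $$ (i + d, ?j) * w $ (i + d)) =
                 (\<Sum>i<d. if m < d - 1 - i then 0 else w $ (d + i) * coeff b (m - (d - 1 - i)))"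
        unfolding atLeast0LessThan
      proof (rule sum.cong[OF refl])
        fix i assume i: "i \<in> {..<d}"
        have e: "i + d - d = i" "i + d - ?j = d + i - ?j" by auto
        show "?S $$ (i + d, ?j) * w $ (i + d) = (if m < d - 1 - i then 0 else w $ (d + i) * coeff b (m - (d - 1 - i)))"
          using term_eq[OF db True, of i "w $ (d + i)"] j i by (simp add: sylv_index e add.commute)
      qed
      finally have "(transpose_mat ?S *\<^sub>v w) $ ?j = coeff (u * a + v * b) m"
        unfolding u_def v_def coeff_add coeff_monom_sum_mult .
      then show ?thesis using w(3) j by simp
    qed
  qed
  show ?thesis
  proof (cases "coeff a d \<noteq> 0")
    case True
    have "degree v < d" using dv d by linarith
    then obtain z where z: "poly a z = 0" "poly b z = 0"
      using common_root_poly[OF True da eq _ uv] by blast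
    show ?thesis
      by (intro exI[of _ z] exI[of _ 1]) (simp add: hf_y da db z)
  next
    case False2: False
    then have cb: "coeff b d \<noteq> 0" using False by auto
    have eq': "v * b + u * a = 0" using eq by (simp add: add.commute)
    have "degree u < d" using du d by linarith
    moreover have "v \<noteq> 0 \<or> u \<noteq> 0" using uv by blast
    ultimately obtain z where z: "poly b z = 0" "poly a z = 0"
      using common_root_poly[OF cb db eq'] by blast
    show ?thesis
      by (intro exI[of _ z] exI[of _ 1]) (simp add: hf_y da db z)
  qed
qed

lemma hres_0: "hres 0 P Q = 1"
proof -
  have "sylvester_hom 0 P Q \<in> carrier_mat 0 0" by (rule sylv_carrier[of 0, simplified])
  then show ?thesis unfolding hres_def by (simp add: det_def' permutes_empty sign_id)
qed

lemma hf_conj: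
  fixes a b c e :: complex
  shows "hform_eval d (fst (conj_mob d (a,b,c,e) P Q)) x y =
           a * hform_eval d P (- b * y + e * x) (a * y + - c * x) + b * hform_eval d Q (- b * y + e * x) (a * y + - c * x)"
    and "hform_eval d (snd (conj_mob d (a,b,c,e) P Q)) x y =
           c * hform_eval d P (- b * y + e * x) (a * y + - c * x) + e * hform_eval d Q (- b * y + e * x) (a * y + - c * x)"
proof -
  have dX: "degree [:- b, e:] \<le> 1" and dY: "degree [:a, - c:] \<le> 1" by (auto simp: degree_pCons_le)
  show "hform_eval d (fst (conj_mob d (a,b,c,e) P Q)) x y =
           a * hform_eval d P (- b * y + e * x) (a * y + - c * x) + b * hform_eval d Q (- b * y + e * x) (a * y + - c * x)"
    by (simp only: conj_mob_def Let_def prod.case fst_conv snd_conv hf_add hf_smult hf_subst[OF dX dY] hf_1)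
  show "hform_eval d (snd (conj_mob d (a,b,c,e) P Q)) x y =
           c * hform_eval d P (- b * y + e * x) (a * y + - c * x) + e * hform_eval d Q (- b * y + e * x) (a * y + - c * x)"
    by (simp only: conj_mob_def Let_def prod.case fst_conv snd_conv hf_add hf_smult hf_subst[OF dX dY] hf_1)
qed

lemma mult_zero_vec: "A \<in> carrier_mat n n \<Longrightarrow> A *\<^sub>v 0\<^sub>v n = (0\<^sub>v n :: complex vec)"
  by (rule eq_vecI) (auto simp: scalar_prod_def)

context ctx begin

lemma hf_eqv:
  assumes "\<And>k. bnd (\<lambda>n. coeff (P n) k)" "\<And>k. bnd (\<lambda>n. coeff (Q n) k)"
    "\<And>k. eqv (\<lambda>n. coeff (P n) k) (\<lambda>n. coeff (Q n) k)" "bnd x" "bnd y"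
  shows "bnd (\<lambda>n. hform_eval d (P n) (x n) (y n)) \<and> bnd (\<lambda>n. hform_eval d (Q n) (x n) (y n)) \<and>
         eqv (\<lambda>n. hform_eval d (P n) (x n) (y n)) (\<lambda>n. hform_eval d (Q n) (x n) (y n))"
  unfolding hform_eval_def
proof (rule sum_eqv[where f = "\<lambda>k n. coeff (P n) k * x n ^ k * y n ^ (d - k)"
                      and g = "\<lambda>k n. coeff (Q n) k * x n ^ k * y n ^ (d - k)"])
  fix k
  have bx: "bnd (\<lambda>n. x n ^ k * y n ^ (d - k))" using assms(4,5) by (intro bnd_mult bnd_power)
  show "bnd (\<lambda>n. coeff (P n) k * x n ^ k * y n ^ (d - k)) \<and> bnd (\<lambda>n. coeff (Q n) k * x n ^ k * y n ^ (d - k)) \<and>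
        eqv (\<lambda>n. coeff (P n) k * x n ^ k * y n ^ (d - k)) (\<lambda>n. coeff (Q n) k * x n ^ k * y n ^ (d - k))"
    using bnd_mult[OF assms(1) bx] bnd_mult[OF assms(2) bx] eqv_mult[OF assms(3) eqv_refl assms(2) bx]
    by (simp add: mult.assoc)
qed simp

lemma bnd_hf:
  assumes "\<And>k. bnd (\<lambda>n. coeff (P n) k)" "bnd x" "bnd y"
  shows "bnd (\<lambda>n. hform_eval d (P n) (x n) (y n))"
  using hf_eqv[OF assms(1) assms(1) _ assms(2,3)] eqv_refl by blast

lemma bnd_if: "bnd f \<Longrightarrow> bnd g \<Longrightarrow> bnd (\<lambda>n. if P then f n else g n)"
  by (cases P) simp_all

lemma eqv_if: "eqv f f' \<Longrightarrow> eqv g g' \<Longrightarrow> eqv (\<lambda>n. if P then f n else g n) (\<lambda>n. if P then f' n else g' n)"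
  by (cases P) simp_all

lemma sml_of_eqv0: "eqv z (\<lambda>n. 0) \<Longrightarrow> sml z" unfolding eqv_def by simp

lemma main_good_red:
  fixes A B :: "nat \<Rightarrow> complex poly" and a b :: "complex poly"
  assumes lim: "is_limit U \<eta> d F G \<delta> A B"
    and NH: "mob_H U \<eta> N" and da: "degree a \<le> \<delta>" and db: "degree b \<le> \<delta>"
    and lH: "in_H U \<eta> l" and l0: "\<not> hzero U \<eta> l"
    and fC: "feq U \<eta> (conjF \<delta> N A B) (\<lambda>n. smult (l n) a)"
    and fD: "feq U \<eta> (conjG \<delta> N A B) (\<lambda>n. smult (l n) b)"
  shows "good_red U \<eta> \<delta> (conjF \<delta> N A B) (conjG \<delta> N A B)"
proof (cases "\<delta> = 0")
  case True
  have "hnorm U \<eta> (\<lambda>n. hres \<delta> (conjF \<delta> N A B n) (conjG \<delta> N A B n)) = 1"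
    unfolding True hres_0 hnorm_hval using conv_hval[OF conv_const[of 1]] by (simp add: one_ereal_def)
  then show ?thesis unfolding good_red_def using True by simp
next
  case False
  then have d1: "\<delta> \<ge> 1" by simp
  define C where "C = conjF \<delta> N A B"
  define D where "D = conjG \<delta> N A B"
  obtain r where r: "conv l r" using lH unfolding inH_iff bnd_def by auto
  have r0: "r \<noteq> 0" using r l0 unfolding hzero_iff sml_def by auto
  have rpos: "r > 0" using conv_nonneg[OF r] r0 by simp
  have bl: "bnd l" using r unfolding bnd_def by auto
  have eC: "\<And>k. eqv (\<lambda>n. coeff (C n) k) (\<lambda>n. l n * coeff a k)"
    using fC unfolding feq_def heq_iff C_def by simp
  have eD: "\<And>k. eqv (\<lambda>n. coeff (D n) k) (\<lambda>n. l n * coeff b k)"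
    using fD unfolding feq_def heq_iff D_def by simp
  have bla: "\<And>k. bnd (\<lambda>n. l n * coeff a k)" using bl bnd_const by (rule bnd_mult)
  have blb: "\<And>k. bnd (\<lambda>n. l n * coeff b k)" using bl bnd_const by (rule bnd_mult)
  have bC: "\<And>k. bnd (\<lambda>n. coeff (C n) k)" using eC bla by (rule eqv_bnd)
  have bD: "\<And>k. bnd (\<lambda>n. coeff (D n) k)" using eD blb by (rule eqv_bnd)
  have fA: "form_H U \<eta> \<delta> A" and fB: "form_H U \<eta> \<delta> B" and cop: "coprime_H U \<eta> \<delta> A B"
    using lim unfolding is_limit_def by auto
  have dA: "\<And>n. degree (A n) \<le> \<delta>" and bA: "\<And>k. bnd (\<lambda>n. coeff (A n) k)"
    using fA unfolding form_H_def inH_iff by auto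
  have dB: "\<And>n. degree (B n) \<le> \<delta>" and bB: "\<And>k. bnd (\<lambda>n. coeff (B n) k)"
    using fB unfolding form_H_def inH_iff by auto
  have resAB: "\<not> sml (\<lambda>n. hres \<delta> (A n) (B n))" using cop False unfolding coprime_H_def hzero_iff by simp
  have res_ab: "hres \<delta> a b \<noteq> 0"
  proof
    assume "hres \<delta> a b = 0"
    then obtain x0 y0 where xy0: "x0 \<noteq> 0 \<or> y0 \<noteq> 0" and ra: "hform_eval \<delta> a x0 y0 = 0" and rb: "hform_eval \<delta> b x0 y0 = 0"
      using res0_root[OF d1 da db] by blast
    define na where "na = (\<lambda>n. case N n of (a,b,c,e) \<Rightarrow> a)"
    define nb where "nb = (\<lambda>n. case N n of (a,b,c,e) \<Rightarrow> b)"
    define nc where "nc = (\<lambda>n. case N n of (a,b,c,e) \<Rightarrow> c)"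
    define ne where "ne = (\<lambda>n. case N n of (a,b,c,e) \<Rightarrow> e)"
    have Nn: "\<And>n. N n = (na n, nb n, nc n, ne n)" unfolding na_def nb_def nc_def ne_def
      by (simp split: prod.split)
    have bna: "bnd na" and bnb: "bnd nb" and bnc: "bnd nc" and bne: "bnd ne"
      and ndet: "\<not> sml (\<lambda>n. mob_det (N n))"
      using NH unfolding mob_H_def na_def nb_def nc_def ne_def inH_iff hzero_iff by auto
    have detN: "\<And>n. mob_det (N n) = na n * ne n - nb n * nc n" by (simp add: Nn mob_det_def)
    define \<xi> where "\<xi> = (\<lambda>n. - nb n * y0 + ne n * x0)"
    define \<zeta> where "\<zeta> = (\<lambda>n. na n * y0 + - nc n * x0)"
    have b\<xi>: "bnd \<xi>" unfolding \<xi>_def using bnb bne bnd_const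
      by (intro bnd_add bnd_mult) (auto simp: bnd_uminus[of nb, symmetric] intro: bnd_mult)
    have b\<zeta>: "bnd \<zeta>" unfolding \<zeta>_def using bna bnc bnd_const
      by (intro bnd_add bnd_mult) (auto simp: bnd_uminus[of nc, symmetric] intro: bnd_mult)
    define EA where "EA = (\<lambda>n. hform_eval \<delta> (A n) (\<xi> n) (\<zeta> n))"
    define EB where "EB = (\<lambda>n. hform_eval \<delta> (B n) (\<xi> n) (\<zeta> n))"
    have bEA: "bnd EA" unfolding EA_def using bA b\<xi> b\<zeta> by (rule bnd_hf)
    have bEB: "bnd EB" unfolding EB_def using bB b\<xi> b\<zeta> by (rule bnd_hf)
    have hC: "\<And>n. hform_eval \<delta> (C n) x0 y0 = na n * EA n + nb n * EB n"
      unfolding C_def conjF_def EA_def EB_def \<xi>_def \<zeta>_def Nn hf_conj(1) ..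
    have hD: "\<And>n. hform_eval \<delta> (D n) x0 y0 = nc n * EA n + ne n * EB n"
      unfolding D_def conjG_def EA_def EB_def \<xi>_def \<zeta>_def Nn hf_conj(2) ..
    have s1: "sml (\<lambda>n. na n * EA n + nb n * EB n)"
    proof -
      have "eqv (\<lambda>n. hform_eval \<delta> (C n) x0 y0) (\<lambda>n. hform_eval \<delta> (smult (l n) a) x0 y0)"
        using hf_eqv[of "\<lambda>n. C n" "\<lambda>n. smult (l n) a" "\<lambda>n. x0" "\<lambda>n. y0" \<delta>] bC bla eC bnd_const by simp
      then show ?thesis using ra unfolding hC hf_smult by (simp add: eqv_def)
    qed
    have s2: "sml (\<lambda>n. nc n * EA n + ne n * EB n)"
    proof -
      have "eqv (\<lambda>n. hform_eval \<delta> (D n) x0 y0) (\<lambda>n. hform_eval \<delta> (smult (l n) b) x0 y0)"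
        using hf_eqv[of "\<lambda>n. D n" "\<lambda>n. smult (l n) b" "\<lambda>n. x0" "\<lambda>n. y0" \<delta>] bD blb eD bnd_const by simp
      then show ?thesis using rb unfolding hD hf_smult by (simp add: eqv_def)
    qed
    have bdet: "bnd (\<lambda>n. mob_det (N n))" unfolding detN using bna bnb bnc bne
      by (intro bnd_diff bnd_mult)
    have sEA: "sml EA"
    proof (rule cancel[OF _ bdet bEA ndet])
      have "sml (\<lambda>n. ne n * (na n * EA n + nb n * EB n) - nb n * (nc n * EA n + ne n * EB n))"
        using s1 s2 bne bnb by (intro sml_diff sml_mult')
      then show "sml (\<lambda>n. mob_det (N n) * EA n)"
        by (rule sml_cong) (simp add: detN algebra_simps)
    qed
    have sEB: "sml EB"
    proof (rule cancel[OF _ bdet bEB ndet])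
      have "sml (\<lambda>n. na n * (nc n * EA n + ne n * EB n) - nc n * (na n * EA n + nb n * EB n))"
        using s1 s2 bna bnc by (intro sml_diff sml_mult')
      then show "sml (\<lambda>n. mob_det (N n) * EB n)"
        by (rule sml_cong) (simp add: detN algebra_simps)
    qed
    define S where "S = (\<lambda>n. sylvester_hom \<delta> (A n) (B n))"
    define vv' where "vv' = (\<lambda>n. vec (2*\<delta>) (\<lambda>j. \<xi> n^(2*\<delta>-1-j) * \<zeta> n^j))"
    have Sc: "\<And>n. S n \<in> carrier_mat (2*\<delta>) (2*\<delta>)" unfolding S_def by (rule sylv_carrier)
    have vc: "\<And>n. vv' n \<in> carrier_vec (2*\<delta>)" unfolding vv'_def by simp
    have Sv: "\<And>n. S n *\<^sub>v vv' n = vec (2*\<delta>) (\<lambda>i. if i < \<delta> then \<xi> n^(\<delta>-1-i) * \<zeta> n^i * EA n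
                         else \<xi> n^(2*\<delta>-1-i) * \<zeta> n^(i-\<delta>) * EB n)"
      unfolding S_def vv'_def EA_def EB_def by (rule sylv_vec[OF dA dB])
    have bS: "\<And>i j. i < 2*\<delta> \<Longrightarrow> j < 2*\<delta> \<Longrightarrow> bnd (\<lambda>n. S n $$ (i,j))"
      unfolding S_def using bA bB bnd_const[of 0]
      by (simp add: sylv_index bnd_if)
    have sSv: "\<And>i. i < 2*\<delta> \<Longrightarrow> sml (\<lambda>n. (S n *\<^sub>v vv' n) $ i)"
    proof -
      fix i assume i: "i < 2*\<delta>"
      show "sml (\<lambda>n. (S n *\<^sub>v vv' n) $ i)"
      proof (cases "i < \<delta>")
        case True
        have "sml (\<lambda>n. (\<xi> n^(\<delta>-1-i) * \<zeta> n^i) * EA n)"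
          using sEA b\<xi> b\<zeta> by (intro sml_mult' bnd_mult bnd_power)
        then show ?thesis unfolding Sv using i True by (simp add: mult.assoc)
      next
        case False
        have "sml (\<lambda>n. (\<xi> n^(2*\<delta>-1-i) * \<zeta> n^(i-\<delta>)) * EB n)"
          using sEB b\<xi> b\<zeta> by (intro sml_mult' bnd_mult bnd_power)
        then show ?thesis unfolding Sv using i False by (simp add: mult.assoc)
      qed
    qed
    have kill: "\<And>k. k < 2*\<delta> \<Longrightarrow> sml (\<lambda>n. vv' n $ k * hres \<delta> (A n) (B n))"
    proof -
      fix k assume k: "k < 2*\<delta>"
      let ?M1 = "\<lambda>n. replace_col (S n) (S n *\<^sub>v vv' n) k"
      let ?M2 = "\<lambda>n. replace_col (S n) (0\<^sub>v (2*\<delta>)) k"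
      have Sd: "\<And>n. dim_row (S n) = 2*\<delta> \<and> dim_col (S n) = 2*\<delta>" unfolding S_def sylvester_hom_def by simp
      have M1c: "\<And>n. ?M1 n \<in> carrier_mat (2*\<delta>) (2*\<delta>)" using Sd by (simp add: replace_col_def)
      have M2c: "\<And>n. ?M2 n \<in> carrier_mat (2*\<delta>) (2*\<delta>)" using Sd by (simp add: replace_col_def)
      have "bnd (\<lambda>n. det (?M1 n)) \<and> bnd (\<lambda>n. det (?M2 n)) \<and> eqv (\<lambda>n. det (?M1 n)) (\<lambda>n. det (?M2 n))"
      proof (rule det_eqv[OF M1c M2c])
        fix i j assume ij: "i < 2*\<delta>" "j < 2*\<delta>"
        show "bnd (\<lambda>n. ?M1 n $$ (i,j)) \<and> bnd (\<lambda>n. ?M2 n $$ (i,j)) \<and> eqv (\<lambda>n. ?M1 n $$ (i,j)) (\<lambda>n. ?M2 n $$ (i,j))"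
        proof (cases "j = k")
          case True
          then show ?thesis using ij Sd sSv[OF ij(1)] bnd_const[of 0] sml_bnd[OF sSv[OF ij(1)]]
            by (simp add: replace_col_def eqv_def)
        next
          case False
          then show ?thesis using ij Sd bS[OF ij] eqv_refl by (simp add: replace_col_def)
        qed
      qed
      moreover have "\<And>n. det (?M1 n) = vv' n $ k * hres \<delta> (A n) (B n)"
        unfolding hres_def using cramer_lemma_mat[OF Sc vc k] unfolding S_def by simp
      moreover have "\<And>n. det (?M2 n) = 0"
        using cramer_lemma_mat[OF Sc _ k, of "0\<^sub>v (2*\<delta>)"] mult_zero_vec[OF Sc] k by simp
      ultimately show "sml (\<lambda>n. vv' n $ k * hres \<delta> (A n) (B n))" unfolding eqv_def by simp
    qed
    have bres: "bnd (\<lambda>n. hres \<delta> (A n) (B n))"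
      unfolding hres_def using det_eqv[of "\<lambda>n. sylvester_hom \<delta> (A n) (B n)" "2*\<delta>" "\<lambda>n. sylvester_hom \<delta> (A n) (B n)"]
        sylv_carrier bS eqv_refl unfolding S_def by blast
    have s\<xi>: "sml \<xi>"
    proof (rule sml_power_imp[OF _ b\<xi>])
      have "sml (\<lambda>n. hres \<delta> (A n) (B n) * \<xi> n ^ (2*\<delta>-1))"
        using kill[of 0] d1 by (simp add: vv'_def mult.commute)
      then show "sml (\<lambda>n. \<xi> n ^ (2*\<delta>-1))"
        by (rule cancel[OF _ bres bnd_power[OF b\<xi>] resAB])
    qed (use d1 in simp)
    have s\<zeta>: "sml \<zeta>"
    proof (rule sml_power_imp[OF _ b\<zeta>])
      have "sml (\<lambda>n. hres \<delta> (A n) (B n) * \<zeta> n ^ (2*\<delta>-1))"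
        using kill[of "2*\<delta>-1"] d1 by (simp add: vv'_def mult.commute)
      then show "sml (\<lambda>n. \<zeta> n ^ (2*\<delta>-1))"
        by (rule cancel[OF _ bres bnd_power[OF b\<zeta>] resAB])
    qed (use d1 in simp)
    have sx: "sml (\<lambda>n. x0 * mob_det (N n))"
    proof -
      have "sml (\<lambda>n. na n * \<xi> n + nb n * \<zeta> n)" using s\<xi> s\<zeta> bna bnb by (intro sml_add sml_mult')
      then show ?thesis by (rule sml_cong) (simp add: detN \<xi>_def \<zeta>_def algebra_simps)
    qed
    have sy: "sml (\<lambda>n. y0 * mob_det (N n))"
    proof -
      have "sml (\<lambda>n. nc n * \<xi> n + ne n * \<zeta> n)" using s\<xi> s\<zeta> bnc bne by (intro sml_add sml_mult')
      then show ?thesis by (rule sml_cong) (simp add: detN \<xi>_def \<zeta>_def algebra_simps)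
    qed
    have "sml (\<lambda>n. mob_det (N n))"
    proof (cases "x0 \<noteq> 0")
      case True
      show ?thesis by (rule cancel[OF sx bnd_const bdet const_not_sml[OF True]])
    next
      case False
      then have "y0 \<noteq> 0" using xy0 by simp
      then show ?thesis by (rule cancel[OF sy bnd_const bdet const_not_sml])
    qed
    with ndet show False by simp
  qed
  have cC: "\<And>k. conv (\<lambda>n. coeff (C n) k) (r * (if coeff a k = 0 then 0 else 1))"
    using eC conv_mult[OF r conv_const] by (rule conv_eqv)
  have cD: "\<And>k. conv (\<lambda>n. coeff (D n) k) (r * (if coeff b k = 0 then 0 else 1))"
    using eD conv_mult[OF r conv_const] by (rule conv_eqv)
  have ex: "\<exists>k\<le>\<delta>. coeff a k \<noteq> 0 \<or> coeff b k \<noteq> 0"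
  proof (rule ccontr)
    assume "\<not> (\<exists>k\<le>\<delta>. coeff a k \<noteq> 0 \<or> coeff b k \<noteq> 0)"
    then have "\<forall>k. coeff a k = 0 \<and> coeff b k = 0" using da db coeff_eq_0
      by (metis le_less_trans not_le_imp_less)
    then have "a = 0" "b = 0" by (auto intro: poly_eqI)
    then show False using res_ab hres_00[OF d1] by simp
  qed
  have mc: "maxcoef U \<eta> \<delta> C D = ereal r"
    unfolding maxcoef_def
  proof (rule Max_eqI)
    fix y assume "y \<in> (\<lambda>k. hnorm U \<eta> (\<lambda>n. coeff (C n) k)) ` {..\<delta>} \<union> (\<lambda>k. hnorm U \<eta> (\<lambda>n. coeff (D n) k)) ` {..\<delta>}"
    then show "y \<le> ereal r" using rpos
      by (auto simp: hnorm_hval conv_hval[OF cC] conv_hval[OF cD])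
  next
    show "ereal r \<in> (\<lambda>k. hnorm U \<eta> (\<lambda>n. coeff (C n) k)) ` {..\<delta>} \<union> (\<lambda>k. hnorm U \<eta> (\<lambda>n. coeff (D n) k)) ` {..\<delta>}"
      using ex by (force simp: hnorm_hval conv_hval[OF cC] conv_hval[OF cD])
  qed simp
  have sylC: "\<And>i j. i < 2*\<delta> \<Longrightarrow> j < 2*\<delta> \<Longrightarrow>
      bnd (\<lambda>n. sylvester_hom \<delta> (C n) (D n) $$ (i,j)) \<and> bnd (\<lambda>n. sylvester_hom \<delta> (smult (l n) a) (smult (l n) b) $$ (i,j))
      \<and> eqv (\<lambda>n. sylvester_hom \<delta> (C n) (D n) $$ (i,j)) (\<lambda>n. sylvester_hom \<delta> (smult (l n) a) (smult (l n) b) $$ (i,j))"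
    using bC bD bla blb eC eD bnd_const[of 0] eqv_refl by (simp add: sylv_index bnd_if eqv_if)
  have "eqv (\<lambda>n. hres \<delta> (C n) (D n)) (\<lambda>n. hres \<delta> (smult (l n) a) (smult (l n) b))"
    unfolding hres_def using det_eqv[OF sylv_carrier sylv_carrier sylC] by blast
  moreover have "conv (\<lambda>n. hres \<delta> (smult (l n) a) (smult (l n) b)) (r ^ (2*\<delta>) * 1)"
    unfolding hres_smult using conv_mult[OF conv_power[OF r] conv_const[of "hres \<delta> a b"]] res_ab by simp
  ultimately have "conv (\<lambda>n. hres \<delta> (C n) (D n)) (r ^ (2*\<delta>))" using conv_eqv by simp
  then have "hnorm U \<eta> (\<lambda>n. hres \<delta> (C n) (D n)) = ereal (r ^ (2*\<delta>))"
    unfolding hnorm_hval by (rule conv_hval)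
  then show ?thesis unfolding good_red_def C_def[symmetric] D_def[symmetric] mc by simp
qed

end

theorem mainTheorem9:
  fixes U :: "nat filter" and d :: nat and P Q :: "nat \<Rightarrow> complex poly"
    and M :: "nat \<Rightarrow> mob" and \<eta> :: "nat \<Rightarrow> real"
  assumes "nonprincipal_ultrafilter U"
    and "d \<ge> 2"
    and "\<forall>n. ratmap d (P n) (Q n)"
    and "g_rescaling M \<eta>"
    and "adapted U d P Q M \<eta>"
    and "\<exists>\<delta> A B N a b l. is_limit U \<eta> d (conjF d M P Q) (conjG d M P Q) \<delta> A B
           \<and> mob_H U \<eta> N \<and> degree a \<le> \<delta> \<and> degree b \<le> \<delta>
           \<and> in_H U \<eta> l \<and> \<not> hzero U \<eta> l
           \<and> feq U \<eta> (conjF \<delta> N A B) (\<lambda>n. smult (l n) a)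
           \<and> feq U \<eta> (conjG \<delta> N A B) (\<lambda>n. smult (l n) b)"
  shows "scale_equiv U \<eta> one_scale"
proof (rule ccontr)
  assume nse: "\<not> scale_equiv U \<eta> one_scale"
  have bot: "U \<noteq> bot" using assms(1) unfolding nonprincipal_ultrafilter_def by auto
  have sc: "is_scale \<eta>" using assms(4) unfolding g_rescaling_def by simp
  then have pos: "\<And>n. 0 < \<eta> n" and ba: "bdd_above (range \<eta>)" unfolding is_scale_def by auto
  then obtain C where C: "\<And>n. \<eta> n \<le> C" by (auto simp: bdd_above_def)
  let ?x = "\<lambda>n. ereal (\<eta> n / one_scale n)"
  have x: "?x = (\<lambda>n. ereal (\<eta> n))" unfolding one_scale_def by simp
  have t: "(?x \<longlongrightarrow> ulim U ?x) U" by (rule ulim_tendsto[OF assms(1)])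
  have "ulim U ?x \<le> ereal C"
    by (rule tendsto_upperbound[OF t _ bot]) (simp add: one_scale_def C)
  then have lt: "ulim U ?x < \<infinity>" by (rule le_less_trans) simp
  have ge: "0 \<le> ulim U ?x"
    by (rule tendsto_lowerbound[OF t _ bot]) (simp add: one_scale_def less_imp_le[OF pos])
  have z: "ulim U ?x = 0" using nse lt ge unfolding scale_equiv_def by simp
  then have "((\<lambda>n. ereal (\<eta> n)) \<longlongrightarrow> ereal 0) U" using t unfolding x by (simp add: zero_ereal_def)
  then have lim0: "(\<eta> \<longlongrightarrow> 0) U" by simp
  interpret ctx U \<eta> using assms(1) pos lim0 by unfold_locales auto
  have sl: "scale_less U \<eta> one_scale" unfolding scale_less_def using z .
  have A2: "\<And>\<delta> A B. is_limit U \<eta> d (conjF d M P Q) (conjG d M P Q) \<delta> A B \<Longrightarrow> \<not> pot_good_red U \<eta> \<delta> A B"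
    using assms(5) sl unfolding adapted_def Let_def by blast
  obtain \<delta> A B N a b l where h: "is_limit U \<eta> d (conjF d M P Q) (conjG d M P Q) \<delta> A B"
     "mob_H U \<eta> N" "degree a \<le> \<delta>" "degree b \<le> \<delta>"
     "in_H U \<eta> l" "\<not> hzero U \<eta> l"
     "feq U \<eta> (conjF \<delta> N A B) (\<lambda>n. smult (l n) a)"
     "feq U \<eta> (conjG \<delta> N A B) (\<lambda>n. smult (l n) b)"
    using assms(6) by blast
  have "good_red U \<eta> \<delta> (conjF \<delta> N A B) (conjG \<delta> N A B)"
    by (rule main_good_red[OF h])
  then have "pot_good_red U \<eta> \<delta> A B" unfolding pot_good_red_def using nse h(2) by blast
  with A2[OF h(1)] show False by simp
qed

end
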